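(* Let $n\ge1$ and let $\alpha$ be a composition with $\bm{l}(\alpha)\le n$. Write $M_\alpha=\sum_\gamma\tilde K_{\alpha,\gamma}\,\mathcal{S}_\gamma$ in $\mathit{QSym}_n$, the sum over compositions $\gamma$ with $\bm{l}(\gamma)\le n$ (the $\mathcal{S}_\gamma$ with $\bm{l}(\gamma)\le n$ form a basis of $\mathit{QSym}_n$). Then $\tilde K_{\alpha,\alpha}=1$, and $\tilde K_{\alpha,\gamma}=0$ whenever $\alpha\prec\gamma$.
   Context: Let $\mathbf{x}=\{x_1,\dots,x_n\}$. A composition is a finite sequence $\alpha=(\alpha_1,\dots,\alpha_k)$ of positive integers with length $\bm{l}(\alpha)=k$. $\mathit{QSym}_n$ is the ring of quasisymmetric polynomials in $\mathbf{x}$ over $\mathbb{Q}$: those $f$ such that for every composition $(\alpha_1,\dots,\alpha_k)$ with $k\le n$ the coefficient of $x_1^{\alpha_1}\cdots x_k^{\alpha_k}$ equals that of $x_{i_1}^{\alpha_1}\cdots x_{i_k}^{\alpha_k}$ for all $i_1<\dots<i_k$. $M_\alpha=\sum_{1\le i_1<\dots<i_k\le n}x_{i_1}^{\alpha_1}\cdots x_{i_k}^{\alpha_k}$. Composition tableaux: the diagram of $\alpha$ has $\alpha_i$ cells in row $i$ (from the top, cells $(i,j)$ in matrix notation); a composition tableau of shape $\alpha$ is a filling $T$ by positive integers with (CT1) rows weakly decreasing left to right; (CT2) leftmost column strictly increasing top to bottom; (CT3) for cells $(i,k),(j,k)$ of the diagram with $i<j$: if $\alpha_i\ge\alpha_j$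 (and $k\ge2$) then $T(j,k)<T(i,k)$ or $T(i,k-1)<T(j,k)$; if $\alpha_i<\alpha_j$ then $T(j,k)<T(i,k)$ or $T(i,k)<T(j,k+1)$. With $x^T=\prod_i x_i^{\#\{\text{entries equal to }i\}}$, the quasisymmetric Schur polynomial is $\mathcal{S}_\alpha(x_1,\dots,x_n)=\sum_T x^T$ over composition tableaux of shape $\alpha$ with entries in $\{1,\dots,n\}$. Revlex order: $\bm\lambda(\alpha)$ is the partition obtained by sorting the parts of $\alpha$ decreasingly; partitions are compared lexicographically ($\lambda>_{\mathrm{lex}}\mu$ iff the first nonzero entry of $\lambda-\mu$ is positive). For compositions $\alpha,\gamma$ of the same size, $\alpha\succ\gamma$ iff either $\bm\lambda(\alpha)>_{\mathrm{lex}}\bm\lambda(\gamma)$, or $\bm\lambda(\alpha)=\bm\lambda(\gamma)$ and $\alpha$ is lexicographically larger than $\gamma$ when both are read from right to left; $\alpha\prec\gamma$ means $\gamma\succ\alpha$. (E.g. $4\succ13\succ31\succ22\succ112\succ121\succ211\succ1111$.) *)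

theory Defs
  imports Complex_Main
begin

text \<open>Variables x_1..x_n are indexed 0..n-1. A polynomial in x_1..x_n over Q
  is represented by its coefficient function on exponent vectors e :: nat \<Rightarrow> nat
  (e m = exponent of x_(m+1)).
  Rows/columns of diagrams are 0-based.\<close>

definition is_comp :: "nat list \<Rightarrow> bool" where
  "is_comp \<alpha> \<longleftrightarrow> (\<forall>a\<in>set \<alpha>. 0 < a)"

text \<open>Coefficient of x^e in the monomial quasisymmetric polynomial M_alpha(x_1..x_n):
  number of index sequences i_1 < ... < i_k < n with x_(i_1)^alpha_1...x_(i_k)^alpha_k = x^e.\<close>
definition M_coeff :: "nat \<Rightarrow> nat list \<Rightarrow> (nat \<Rightarrow> nat) \<Rightarrow> nat" where
  "M_coeff n \<alpha> e = card {is. length is = length \<alpha> \<and> sorted_wrt (<) is \<and> (\<forall>i\<in>set is. i < n)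
      \<and> (\<forall>m. e m = (\<Sum>j<length \<alpha>. if is ! j = m then \<alpha> ! j else 0))}"

definition cells :: "nat list \<Rightarrow> (nat \<times> nat) set" where
  "cells \<alpha> = {(i, j). i < length \<alpha> \<and> j < \<alpha> ! i}"

definition comp_tableaux :: "nat \<Rightarrow> nat list \<Rightarrow> (nat \<Rightarrow> nat \<Rightarrow> nat) set" where
  "comp_tableaux n \<alpha> = {T.
     (\<forall>i j. (i, j) \<notin> cells \<alpha> \<longrightarrow> T i j = 0)
   \<and> (\<forall>i j. (i, j) \<in> cells \<alpha> \<longrightarrow> 1 \<le> T i j \<and> T i j \<le> n)
   \<and> (\<forall>i j. i < length \<alpha> \<and> Suc j < \<alpha> ! i \<longrightarrow> T i (Suc j) \<le> T i j)
   \<and> (\<forall>i i'. i < i' \<and> i' < length \<alpha> \<longrightarrow> T i 0 < T i' 0)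
   \<and> (\<forall>i j k. i < j \<and> j < length \<alpha> \<and> k < \<alpha> ! i \<and> k < \<alpha> ! j \<longrightarrow>
        ((\<alpha> ! j \<le> \<alpha> ! i \<and> 1 \<le> k \<longrightarrow> T j k < T i k \<or> T i (k - 1) < T j k)
       \<and> (\<alpha> ! i < \<alpha> ! j \<longrightarrow> T j k < T i k \<or> T i k < T j (Suc k))))}"

text \<open>Coefficient of x^e in the quasisymmetric Schur polynomial S_alpha(x_1..x_n).\<close>
definition S_coeff :: "nat \<Rightarrow> nat list \<Rightarrow> (nat \<Rightarrow> nat) \<Rightarrow> nat" where
  "S_coeff n \<alpha> e = card {T \<in> comp_tableaux n \<alpha>.
      \<forall>m. e m = card {c \<in> cells \<alpha>. case_prod T c = Suc m}}"

definition part_of :: "nat list \<Rightarrow> nat list" where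
  "part_of \<alpha> = rev (sort \<alpha>)"

definition nth0 :: "nat list \<Rightarrow> nat \<Rightarrow> nat" where
  "nth0 l i = (if i < length l then l ! i else 0)"

definition lex_gt :: "nat list \<Rightarrow> nat list \<Rightarrow> bool" where
  "lex_gt l m \<longleftrightarrow> (\<exists>k. (\<forall>i<k. nth0 l i = nth0 m i) \<and> nth0 m k < nth0 l k)"

definition revlex_gt :: "nat list \<Rightarrow> nat list \<Rightarrow> bool" where
  "revlex_gt \<alpha> \<gamma> \<longleftrightarrow> is_comp \<alpha> \<and> is_comp \<gamma> \<and> sum_list \<alpha> = sum_list \<gamma> \<and>
     (lex_gt (part_of \<alpha>) (part_of \<gamma>) \<or>
      (part_of \<alpha> = part_of \<gamma> \<and> lex_gt (rev \<alpha>) (rev \<gamma>)))"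

text \<open>K is a (finitely supported) coefficient family expressing M_alpha in the basis
  S_gamma, l(gamma) \<le> n, of QSym_n.\<close>
definition M_expansion :: "nat \<Rightarrow> nat list \<Rightarrow> (nat list \<Rightarrow> rat) \<Rightarrow> bool" where
  "M_expansion n \<alpha> K \<longleftrightarrow> finite {\<gamma>. K \<gamma> \<noteq> 0}
     \<and> (\<forall>\<gamma>. K \<gamma> \<noteq> 0 \<longrightarrow> is_comp \<gamma> \<and> length \<gamma> \<le> n)
     \<and> (\<forall>e. of_nat (M_coeff n \<alpha> e) = (\<Sum>\<gamma>\<in>{\<gamma>. K \<gamma> \<noteq> 0}. K \<gamma> * of_nat (S_coeff n \<gamma> e)))"

end

theory Submission
  imports Defs
begin


lemma lex_gt_irrefl: "\<not> lex_gt l l"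
  unfolding lex_gt_def by auto

lemma lex_gt_trans:
  assumes "lex_gt l m" "lex_gt m p" shows "lex_gt l p"
proof -
  obtain k1 where k1: "\<forall>i<k1. nth0 l i = nth0 m i" "nth0 m k1 < nth0 l k1"
    using assms(1) unfolding lex_gt_def by blast
  obtain k2 where k2: "\<forall>i<k2. nth0 m i = nth0 p i" "nth0 p k2 < nth0 m k2"
    using assms(2) unfolding lex_gt_def by blast
  show ?thesis unfolding lex_gt_def
  proof (cases k1 k2 rule: linorder_cases)
    case less
    then show "\<exists>k. (\<forall>i<k. nth0 l i = nth0 p i) \<and> nth0 p k < nth0 l k"
      using k1 k2 by (intro exI[of _ k1]) auto
  next
    case equal
    then show "\<exists>k. (\<forall>i<k. nth0 l i = nth0 p i) \<and> nth0 p k < nth0 l k"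
      using k1 k2 by (intro exI[of _ k1]) auto
  next
    case greater
    then show "\<exists>k. (\<forall>i<k. nth0 l i = nth0 p i) \<and> nth0 p k < nth0 l k"
      using k1 k2 by (intro exI[of _ k2]) auto
  qed
qed

lemma lex_gt_total:
  assumes "\<not> (\<forall>i. nth0 l i = nth0 m i)" shows "lex_gt l m \<or> lex_gt m l"
proof -
  define k where "k = (LEAST i. nth0 l i \<noteq> nth0 m i)"
  have k: "nth0 l k \<noteq> nth0 m k" using assms LeastI_ex[of "\<lambda>i. nth0 l i \<noteq> nth0 m i"] unfolding k_def by blast
  have "\<forall>i<k. nth0 l i = nth0 m i" unfolding k_def using not_less_Least by blast
  with k show ?thesis unfolding lex_gt_def
    by (metis linorder_neqE_nat)
qed

lemma nth0_eq_list_eq: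
  assumes "\<forall>a\<in>set l. 0 < a" "\<forall>a\<in>set m. 0 < a" "\<forall>i. nth0 l i = nth0 m i"
  shows "l = m"
proof -
  have len: "length l = length m"
  proof (rule ccontr)
    assume "length l \<noteq> length m"
    then consider "length l < length m" | "length m < length l" by linarith
    then show False
    proof cases
      case 1
      then have "nth0 m (length l) > 0" using assms(2) unfolding nth0_def by auto
      moreover have "nth0 l (length l) = 0" unfolding nth0_def by auto
      ultimately show False using assms(3) by (metis gr_implies_not0)
    next
      case 2
      then have "nth0 l (length m) > 0" using assms(1) unfolding nth0_def by auto
      moreover have "nth0 m (length m) = 0" unfolding nth0_def by auto
      ultimately show False using assms(3) by (metis gr_implies_not0)
    qed
  qed
  show ?thesis
  proof (rule nth_equalityI[OF len])
    fix i assume "i < length l"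
    then show "l ! i = m ! i" using assms(3)[rule_format, of i] len unfolding nth0_def by auto
  qed
qed

lemma revlex_gt_irrefl: "\<not> revlex_gt a a"
  unfolding revlex_gt_def using lex_gt_irrefl by auto

lemma revlex_gt_trans:
  assumes "revlex_gt a b" "revlex_gt b c" shows "revlex_gt a c"
  using assms unfolding revlex_gt_def
  by (metis lex_gt_trans)

lemma finite_comps: "finite {\<gamma>. is_comp \<gamma> \<and> length \<gamma> \<le> n \<and> sum_list \<gamma> = t}"
proof (rule finite_subset[OF _ finite_lists_length_le[of "{..t}" n]])
  show "{\<gamma>. is_comp \<gamma> \<and> length \<gamma> \<le> n \<and> sum_list \<gamma> = t} \<subseteq> {xs. set xs \<subseteq> {..t} \<and> length xs \<le> n}"
    by (auto simp: member_le_sum_list)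
qed auto

section \<open>Generic triangular systems\<close>

lemma tri_zero:
  fixes A :: "'a \<Rightarrow> 'a \<Rightarrow> rat" and K :: "'a \<Rightarrow> rat"
  assumes fin: "finite C" and irr: "\<forall>x. \<not> R x x"
    and tr: "\<forall>x y z. R x y \<longrightarrow> R y z \<longrightarrow> R x z"
    and tri: "\<forall>\<gamma>\<in>C. \<forall>\<delta>\<in>C. A \<gamma> \<delta> \<noteq> 0 \<longrightarrow> \<gamma> = \<delta> \<or> R \<delta> \<gamma>"
    and diag: "\<forall>\<gamma>\<in>C. A \<gamma> \<gamma> = 1"
    and EC: "E \<subseteq> C" and Eup: "\<forall>\<gamma>\<in>E. \<forall>\<gamma>'\<in>C. R \<gamma> \<gamma>' \<longrightarrow> \<gamma>' \<in> E"
    and eq: "\<forall>\<epsilon>\<in>E. (\<Sum>\<gamma>\<in>C. K \<gamma> * A \<gamma> \<epsilon>) = 0"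
  shows "\<forall>\<gamma>\<in>E. K \<gamma> = 0"
proof (rule ccontr)
  assume "\<not> (\<forall>\<gamma>\<in>E. K \<gamma> = 0)"
  define D where "D = {\<gamma>\<in>E. K \<gamma> \<noteq> 0}"
  have Dne: "\<exists>x. x \<in> D" using \<open>\<not> (\<forall>\<gamma>\<in>E. K \<gamma> = 0)\<close> unfolding D_def by auto
  have finD: "finite D" using fin EC unfolding D_def by (auto intro: finite_subset)
  obtain g where g: "g \<in> D" and gmin: "\<forall>y. y \<in> D \<longrightarrow> card {x\<in>D. R g x} \<le> card {x\<in>D. R y x}"
    using ex_has_least_nat[of "\<lambda>x. x \<in> D" _ "\<lambda>y. card {x\<in>D. R y x}"] Dne by blast
  have nobig: "\<not> (\<exists>x\<in>D. R g x)"
  proof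
    assume "\<exists>x\<in>D. R g x"
    then obtain x where x: "x \<in> D" "R g x" by blast
    have "{y\<in>D. R x y} \<subset> {y\<in>D. R g y}"
      using x tr irr by auto
    then have "card {y\<in>D. R x y} < card {y\<in>D. R g y}"
      using finD by (intro psubset_card_mono) auto
    with gmin x show False by force
  qed
  have gC: "g \<in> C" and gE: "g \<in> E" using g EC unfolding D_def by auto
  have "(\<Sum>\<gamma>\<in>C. K \<gamma> * A \<gamma> g) = K g * A g g + (\<Sum>\<gamma>\<in>C - {g}. K \<gamma> * A \<gamma> g)"
    using fin gC by (simp add: sum.remove)
  also have "(\<Sum>\<gamma>\<in>C - {g}. K \<gamma> * A \<gamma> g) = 0"
  proof (rule sum.neutral, rule ballI)
    fix \<gamma> assume \<gamma>: "\<gamma> \<in> C - {g}"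
    show "K \<gamma> * A \<gamma> g = 0"
    proof (cases "A \<gamma> g = 0")
      case False
      then have "R g \<gamma>" using tri \<gamma> gC by auto
      then have "\<gamma> \<in> E" using Eup gE \<gamma> by auto
      then have "K \<gamma> = 0" using nobig \<open>R g \<gamma>\<close> unfolding D_def by auto
      then show ?thesis by simp
    qed simp
  qed
  finally have "(\<Sum>\<gamma>\<in>C. K \<gamma> * A \<gamma> g) = K g" using diag gC by simp
  with eq gE have "K g = 0" by simp
  with g show False unfolding D_def by simp
qed

lemma tri_exists:
  fixes A :: "'a \<Rightarrow> 'a \<Rightarrow> rat"
  assumes fin: "finite C" and irr: "\<forall>x. \<not> R x x"
    and tr: "\<forall>x y z. R x y \<longrightarrow> R y z \<longrightarrow> R x z"
    and tri: "\<forall>\<gamma>\<in>C. \<forall>\<delta>\<in>C. A \<gamma> \<delta> \<noteq> 0 \<longrightarrow> \<gamma> = \<delta> \<or> R \<delta> \<gamma>"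
    and diag: "\<forall>\<gamma>\<in>C. A \<gamma> \<gamma> = 1"
  shows "\<delta> \<in> C \<Longrightarrow> \<exists>K. (\<forall>\<gamma>. \<gamma> \<notin> C \<longrightarrow> K \<gamma> = 0) \<and>
            (\<forall>\<epsilon>\<in>C. (\<Sum>\<gamma>\<in>C. K \<gamma> * A \<gamma> \<epsilon>) = (if \<epsilon> = \<delta> then 1 else 0))"
proof (induction "card {\<epsilon>\<in>C. R \<epsilon> \<delta>}" arbitrary: \<delta> rule: less_induct)
  case less
  define D where "D = {\<epsilon>\<in>C. R \<epsilon> \<delta>}"
  have "\<forall>\<epsilon>\<in>D. \<exists>K. (\<forall>\<gamma>. \<gamma> \<notin> C \<longrightarrow> K \<gamma> = 0) \<and>
            (\<forall>\<eta>\<in>C. (\<Sum>\<gamma>\<in>C. K \<gamma> * A \<gamma> \<eta>) = (if \<eta> = \<epsilon> then 1 else 0))"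
  proof
    fix \<epsilon> assume e: "\<epsilon> \<in> D"
    have "{x\<in>C. R x \<epsilon>} \<subset> D" using e tr irr unfolding D_def by auto
    then have "card {x\<in>C. R x \<epsilon>} < card D"
      using fin unfolding D_def by (intro psubset_card_mono) auto
    then show "\<exists>K. (\<forall>\<gamma>. \<gamma> \<notin> C \<longrightarrow> K \<gamma> = 0) \<and>
            (\<forall>\<eta>\<in>C. (\<Sum>\<gamma>\<in>C. K \<gamma> * A \<gamma> \<eta>) = (if \<eta> = \<epsilon> then 1 else 0))"
      using less.hyps e unfolding D_def by auto
  qed
  then obtain f where f: "\<forall>\<epsilon>\<in>D. (\<forall>\<gamma>. \<gamma> \<notin> C \<longrightarrow> f \<epsilon> \<gamma> = 0) \<and>
            (\<forall>\<eta>\<in>C. (\<Sum>\<gamma>\<in>C. f \<epsilon> \<gamma> * A \<gamma> \<eta>) = (if \<eta> = \<epsilon> then 1 else 0))"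
    by metis
  have finD: "finite D" using fin unfolding D_def by auto
  define K where "K = (\<lambda>\<gamma>. (if \<gamma> = \<delta> then 1 else 0) - (\<Sum>\<epsilon>\<in>D. A \<delta> \<epsilon> * f \<epsilon> \<gamma>))"
  show ?case
  proof (intro exI conjI allI impI ballI)
    fix \<gamma> assume "\<gamma> \<notin> C"
    then show "K \<gamma> = 0" using less.prems f unfolding K_def by auto
  next
    fix \<eta> assume eta: "\<eta> \<in> C"
    have "(\<Sum>\<gamma>\<in>C. K \<gamma> * A \<gamma> \<eta>) =
          (\<Sum>\<gamma>\<in>C. (if \<gamma> = \<delta> then 1 else 0) * A \<gamma> \<eta>) - (\<Sum>\<gamma>\<in>C. (\<Sum>\<epsilon>\<in>D. A \<delta> \<epsilon> * f \<epsilon> \<gamma>) * A \<gamma> \<eta>)"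
      unfolding K_def by (simp add: left_diff_distrib sum_subtractf)
    also have "(\<Sum>\<gamma>\<in>C. (if \<gamma> = \<delta> then 1 else 0) * A \<gamma> \<eta>) = A \<delta> \<eta>"
      using less.prems fin by (simp add: if_distrib[of "\<lambda>x. x * _"] sum.delta cong: if_cong)
    also have "(\<Sum>\<gamma>\<in>C. (\<Sum>\<epsilon>\<in>D. A \<delta> \<epsilon> * f \<epsilon> \<gamma>) * A \<gamma> \<eta>) =
               (\<Sum>\<epsilon>\<in>D. A \<delta> \<epsilon> * (\<Sum>\<gamma>\<in>C. f \<epsilon> \<gamma> * A \<gamma> \<eta>))"
      by (simp add: sum_distrib_left sum_distrib_right sum.swap[of _ C D] mult.assoc)
    also have "\<dots> = (\<Sum>\<epsilon>\<in>D. A \<delta> \<epsilon> * (if \<eta> = \<epsilon> then 1 else 0))"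
      using f eta by (intro sum.cong) auto
    also have "\<dots> = (if \<eta> \<in> D then A \<delta> \<eta> else 0)"
      using finD by (simp add: if_distrib[of "\<lambda>x. _ * x"] sum.delta' cong: if_cong)
    finally have S: "(\<Sum>\<gamma>\<in>C. K \<gamma> * A \<gamma> \<eta>) = A \<delta> \<eta> - (if \<eta> \<in> D then A \<delta> \<eta> else 0)" .
    show "(\<Sum>\<gamma>\<in>C. K \<gamma> * A \<gamma> \<eta>) = (if \<eta> = \<delta> then 1 else 0)"
    proof (cases "\<eta> = \<delta>")
      case True
      then have "\<eta> \<notin> D" using irr unfolding D_def by auto
      then show ?thesis using S True diag eta by simp
    next
      case False
      show ?thesis
      proof (cases "\<eta> \<in> D")
        case True then show ?thesis using S False by simp
      next
        case nD: False
        then have "\<not> R \<eta> \<delta>" using eta unfolding D_def by auto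
        then have "A \<delta> \<eta> = 0" using tri less.prems eta False by metis
        then show ?thesis using S False by simp
      qed
    qed
  qed
qed




definition content :: "nat list \<Rightarrow> (nat \<Rightarrow> nat \<Rightarrow> nat) \<Rightarrow> nat \<Rightarrow> nat" where
  "content \<gamma> T m = card {c \<in> cells \<gamma>. case_prod T c = Suc m}"

lemma S_coeff_alt: "S_coeff n \<gamma> e = card {T \<in> comp_tableaux n \<gamma>. \<forall>m. e m = content \<gamma> T m}"
  unfolding S_coeff_def content_def by simp

lemma cells_Sigma: "cells \<gamma> = Sigma {..<length \<gamma>} (\<lambda>i. {..<\<gamma>!i})"
  unfolding cells_def by auto

lemma finite_cells[simp]: "finite (cells \<gamma>)"
  unfolding cells_Sigma by auto

lemma card_cells: "card (cells \<gamma>) = sum_list \<gamma>"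
  unfolding cells_Sigma by (simp add: card_SigmaI sum_list_sum_nth atLeast0LessThan)

lemma mem_cells[simp]: "(i, j) \<in> cells \<gamma> \<longleftrightarrow> i < length \<gamma> \<and> j < \<gamma> ! i"
  unfolding cells_def by auto

lemma tabD:
  assumes "T \<in> comp_tableaux n \<alpha>"
  shows "\<And>i j. (i, j) \<notin> cells \<alpha> \<Longrightarrow> T i j = 0"
    and "\<And>i j. (i, j) \<in> cells \<alpha> \<Longrightarrow> 1 \<le> T i j \<and> T i j \<le> n"
    and "\<And>i j. i < length \<alpha> \<Longrightarrow> Suc j < \<alpha> ! i \<Longrightarrow> T i (Suc j) \<le> T i j"
    and "\<And>i i'. i < i' \<Longrightarrow> i' < length \<alpha> \<Longrightarrow> T i 0 < T i' 0"
    and "\<And>i j k. i < j \<Longrightarrow> j < length \<alpha> \<Longrightarrow> k < \<alpha> ! i \<Longrightarrow> k < \<alpha> ! j \<Longrightarrow>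
        \<alpha> ! j \<le> \<alpha> ! i \<Longrightarrow> 1 \<le> k \<Longrightarrow> T j k < T i k \<or> T i (k - 1) < T j k"
    and "\<And>i j k. i < j \<Longrightarrow> j < length \<alpha> \<Longrightarrow> k < \<alpha> ! i \<Longrightarrow> k < \<alpha> ! j \<Longrightarrow>
        \<alpha> ! i < \<alpha> ! j \<Longrightarrow> T j k < T i k \<or> T i k < T j (Suc k)"
proof -
  note H = assms[unfolded comp_tableaux_def mem_Collect_eq]
  note H1 = conjunct1[OF H] and H2 = conjunct1[OF conjunct2[OF H]]
    and H3 = conjunct1[OF conjunct2[OF conjunct2[OF H]]]
    and H4 = conjunct1[OF conjunct2[OF conjunct2[OF conjunct2[OF H]]]]
    and H5 = conjunct2[OF conjunct2[OF conjunct2[OF conjunct2[OF H]]]]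
  show "\<And>i j. (i, j) \<notin> cells \<alpha> \<Longrightarrow> T i j = 0" using H1 by blast
  show "\<And>i j. (i, j) \<in> cells \<alpha> \<Longrightarrow> 1 \<le> T i j \<and> T i j \<le> n" using H2 by blast
  show "\<And>i j. i < length \<alpha> \<Longrightarrow> Suc j < \<alpha> ! i \<Longrightarrow> T i (Suc j) \<le> T i j" using H3 by blast
  show "\<And>i i'. i < i' \<Longrightarrow> i' < length \<alpha> \<Longrightarrow> T i 0 < T i' 0" using H4 by blast
  show "\<And>i j k. i < j \<Longrightarrow> j < length \<alpha> \<Longrightarrow> k < \<alpha> ! i \<Longrightarrow> k < \<alpha> ! j \<Longrightarrow>
        \<alpha> ! j \<le> \<alpha> ! i \<Longrightarrow> 1 \<le> k \<Longrightarrow> T j k < T i k \<or> T i (k - 1) < T j k"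
    using H5 by (meson order_refl)
  show "\<And>i j k. i < j \<Longrightarrow> j < length \<alpha> \<Longrightarrow> k < \<alpha> ! i \<Longrightarrow> k < \<alpha> ! j \<Longrightarrow>
        \<alpha> ! i < \<alpha> ! j \<Longrightarrow> T j k < T i k \<or> T i k < T j (Suc k)"
    using H5 by (meson order_refl)
qed

lemma row_mono:
  assumes "T \<in> comp_tableaux n \<gamma>" "i < length \<gamma>" "j \<le> j'" "j' < \<gamma> ! i"
  shows "T i j' \<le> T i j"
  using assms(3,4)
proof (induction j' rule: dec_induct)
  case base then show ?case by simp
next
  case (step m)
  then have "T i (Suc m) \<le> T i m" using tabD(3)[OF assms(1) assms(2)] by simp
  with step show ?case by simp
qed

lemma col_distinct:
  assumes T: "T \<in> comp_tableaux n \<gamma>" and "i < i'" "i' < length \<gamma>" "k < \<gamma> ! i" "k < \<gamma> ! i'"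
  shows "T i k \<noteq> T i' k"
proof
  assume eq: "T i k = T i' k"
  have il: "i < length \<gamma>" using assms by simp
  show False
  proof (cases "k = 0")
    case True
    then show ?thesis using tabD(4)[OF T assms(2,3)] eq by simp
  next
    case False
    show ?thesis
    proof (cases "\<gamma> ! i' \<le> \<gamma> ! i")
      case True
      have "T i k \<le> T i (k - 1)" using row_mono[OF T il, of "k - 1" k] assms by simp
      then show ?thesis using tabD(5)[OF T assms(2-5) True] False eq by simp
    next
      case lt: False
      have "Suc k < \<gamma> ! i'" using lt assms by simp
      then have "T i' (Suc k) \<le> T i' k" using row_mono[OF T assms(3), of k "Suc k"] by simp
      then show ?thesis using tabD(6)[OF T assms(2-5)] lt eq by simp
    qed
  qed
qed

lemma content_pos_val:
  assumes "T \<in> comp_tableaux n \<gamma>" "(i, j) \<in> cells \<gamma>"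
  shows "\<exists>m. T i j = Suc m \<and> m < n \<and> 0 < content \<gamma> T m"
proof -
  obtain m where m: "T i j = Suc m" using tabD(2)[OF assms] by (cases "T i j") auto
  have "m < n" using tabD(2)[OF assms] m by simp
  moreover have "(i, j) \<in> {c \<in> cells \<gamma>. case_prod T c = Suc m}" using assms m by auto
  then have "0 < content \<gamma> T m" unfolding content_def
    by (metis (no_types, lifting) card_gt_0_iff empty_iff finite_cells finite_subset mem_Collect_eq subsetI)
  ultimately show ?thesis using m by blast
qed

lemma content_size:
  assumes T: "T \<in> comp_tableaux n \<gamma>"
  shows "(\<Sum>m<n. content \<gamma> T m) = sum_list \<gamma>"
proof -
  have "cells \<gamma> = (\<Union>m\<in>{..<n}. {c \<in> cells \<gamma>. case_prod T c = Suc m})"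
    using content_pos_val[OF T] by fastforce
  then have "card (cells \<gamma>) = card (\<Union>m\<in>{..<n}. {c \<in> cells \<gamma>. case_prod T c = Suc m})" by simp
  also have "\<dots> = (\<Sum>m<n. content \<gamma> T m)"
    unfolding content_def by (rule card_UN_disjoint) auto
  finally show ?thesis using card_cells by simp
qed

lemma sum_nth0: "length \<epsilon> \<le> n \<Longrightarrow> (\<Sum>m<n. nth0 \<epsilon> m) = sum_list \<epsilon>"
proof -
  assume l: "length \<epsilon> \<le> n"
  have "(\<Sum>m<n. nth0 \<epsilon> m) = (\<Sum>m<length \<epsilon>. nth0 \<epsilon> m)"
    using l by (intro sum.mono_neutral_right) (auto simp: nth0_def)
  also have "\<dots> = (\<Sum>m<length \<epsilon>. \<epsilon> ! m)" by (intro sum.cong) (auto simp: nth0_def)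
  finally show ?thesis by (simp add: sum_list_sum_nth atLeast0LessThan)
qed

lemma tab_size:
  assumes T: "T \<in> comp_tableaux n \<gamma>" and c: "\<forall>m. nth0 \<epsilon> m = content \<gamma> T m" and l: "length \<epsilon> \<le> n"
  shows "sum_list \<epsilon> = sum_list \<gamma>"
  using content_size[OF T] sum_nth0[OF l] c by simp

lemma tab_vals:
  assumes T: "T \<in> comp_tableaux n \<gamma>" and c: "\<forall>m. nth0 \<epsilon> m = content \<gamma> T m"
    and "(i, j) \<in> cells \<gamma>"
  shows "1 \<le> T i j \<and> T i j \<le> length \<epsilon>"
proof -
  obtain m where m: "T i j = Suc m" "0 < content \<gamma> T m" using content_pos_val[OF T assms(3)] by blast
  then have "0 < nth0 \<epsilon> m" using c by simp
  then have "m < length \<epsilon>" unfolding nth0_def by (auto split: if_splits)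
  then show ?thesis using m by simp
qed




definition cntge :: "nat list \<Rightarrow> nat \<Rightarrow> nat" where
  "cntge l w = card {i. i < length l \<and> w \<le> l ! i}"

lemma card_swap:
  assumes "finite A" "finite B"
  shows "(\<Sum>a\<in>A. card {b\<in>B. P a b}) = (\<Sum>b\<in>B. card {a\<in>A. P a b})"
proof -
  have c: "\<And>S Q. finite S \<Longrightarrow> card {x\<in>S. Q x} = (\<Sum>x\<in>S. if Q x then 1 else 0 :: nat)"
    by (simp add: sum.If_cases Int_def conj_commute)
  show ?thesis using assms by (simp add: c sum.swap[of _ A B])
qed

lemma dominance_contra:
  assumes T: "T \<in> comp_tableaux n \<gamma>" and c: "\<forall>m. nth0 \<epsilon> m = content \<gamma> T m"
    and v: "1 \<le> v" and eqa: "\<forall>w>v. cntge \<epsilon> w = cntge \<gamma> w" and lt: "cntge \<gamma> v < cntge \<epsilon> v"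
  shows False
proof -
  define J where "J = {j. j < length \<epsilon> \<and> v \<le> \<epsilon> ! j}"
  define b where "b = card J"
  define W where "W = sum_list \<epsilon> + sum_list \<gamma>"
  have finJ: "finite J" unfolding J_def by auto
  have bdef: "b = cntge \<epsilon> v" unfolding b_def J_def cntge_def by simp
  define X where "X = {c \<in> cells \<gamma>. case_prod T c \<in> Suc ` J}"
  have finX: "finite X" unfolding X_def by auto
  have a: "(\<Sum>j\<in>J. \<epsilon> ! j) = card X"
  proof -
    have "X = (\<Union>j\<in>J. {c \<in> cells \<gamma>. case_prod T c = Suc j})" unfolding X_def by auto
    then have "card X = (\<Sum>j\<in>J. card {c \<in> cells \<gamma>. case_prod T c = Suc j})"
      using finJ by (simp only:) (rule card_UN_disjoint, auto)
    also have "\<dots> = (\<Sum>j\<in>J. \<epsilon> ! j)"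
    proof (rule sum.cong)
      fix j assume "j \<in> J"
      then have "j < length \<epsilon>" unfolding J_def by simp
      then show "card {c \<in> cells \<gamma>. case_prod T c = Suc j} = \<epsilon> ! j"
        using c[rule_format, of j] unfolding content_def nth0_def by simp
    qed simp
    finally show ?thesis by simp
  qed
  define Xc where "Xc = (\<lambda>col. {c \<in> X. snd c = col})"
  have b1: "card X \<le> (\<Sum>col<W. min b (cntge \<gamma> (Suc col)))"
  proof -
    have "X = (\<Union>col\<in>{..<W}. Xc col)"
    proof -
      have "\<And>i j. (i, j) \<in> X \<Longrightarrow> j < W"
      proof -
        fix i j assume "(i, j) \<in> X"
        then have "i < length \<gamma>" "j < \<gamma> ! i" unfolding X_def by auto
        then have "j < sum_list \<gamma>" by (meson elem_le_sum_list less_le_trans)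
        then show "j < W" unfolding W_def by simp
      qed
      then show ?thesis unfolding Xc_def by auto
    qed
    then have "card X \<le> (\<Sum>col<W. card (Xc col))"
      by (metis card_UN_le finite_lessThan)
    also have "\<dots> \<le> (\<Sum>col<W. min b (cntge \<gamma> (Suc col)))"
    proof (rule sum_mono)
      fix col assume "col \<in> {..<W}"
      have inj: "inj_on (\<lambda>c. case_prod T c - 1) (Xc col)"
      proof (rule inj_onI)
        fix x y assume x: "x \<in> Xc col" and y: "y \<in> Xc col"
          and e: "case_prod T x - 1 = case_prod T y - 1"
        obtain i where xi: "x = (i, col)" using x unfolding Xc_def by (cases x) auto
        obtain i' where yi: "y = (i', col)" using y unfolding Xc_def by (cases y) auto
        have xc: "i < length \<gamma>" "col < \<gamma> ! i" "T i col \<in> Suc ` J"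
          using x xi unfolding Xc_def X_def by auto
        have yc: "i' < length \<gamma>" "col < \<gamma> ! i'" "T i' col \<in> Suc ` J"
          using y yi unfolding Xc_def X_def by auto
        have eq: "T i col = T i' col" using e xc(3) yc(3) xi yi by auto
        have "i = i'"
        proof (rule ccontr)
          assume "i \<noteq> i'"
          then consider "i < i'" | "i' < i" by linarith
          then show False
          proof cases
            case 1 then show False using col_distinct[OF T 1 yc(1) xc(2) yc(2)] eq by simp
          next
            case 2 then show False using col_distinct[OF T 2 xc(1) yc(2) xc(2)] eq by simp
          qed
        qed
        then show "x = y" using xi yi by simp
      qed
      have img: "(\<lambda>c. case_prod T c - 1) ` (Xc col) \<subseteq> J"
        unfolding Xc_def X_def by auto
      have c1: "card (Xc col) \<le> b"
        unfolding b_def using card_inj_on_le[OF inj img finJ] .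
      have "Xc col \<subseteq> (\<lambda>i. (i, col)) ` {i. i < length \<gamma> \<and> Suc col \<le> \<gamma> ! i}"
        unfolding Xc_def X_def by auto
      then have "card (Xc col) \<le> card ((\<lambda>i. (i, col)) ` {i. i < length \<gamma> \<and> Suc col \<le> \<gamma> ! i})"
        by (intro card_mono) auto
      also have "\<dots> \<le> cntge \<gamma> (Suc col)" unfolding cntge_def by (rule card_image_le) auto
      finally show "card (Xc col) \<le> min b (cntge \<gamma> (Suc col))" using c1 by simp
    qed
    finally show ?thesis .
  qed
  have cc: "(\<Sum>j\<in>J. \<epsilon> ! j) = (\<Sum>col<W. card {j\<in>J. Suc col \<le> \<epsilon> ! j})"
  proof -
    have "\<And>j. j \<in> J \<Longrightarrow> \<epsilon> ! j = card {col\<in>{..<W}. Suc col \<le> \<epsilon> ! j}"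
    proof -
      fix j assume "j \<in> J"
      then have "\<epsilon> ! j \<le> W" unfolding J_def W_def using elem_le_sum_list by fastforce
      then have "{col\<in>{..<W}. Suc col \<le> \<epsilon> ! j} = {..<\<epsilon> ! j}" by auto
      then show "\<epsilon> ! j = card {col\<in>{..<W}. Suc col \<le> \<epsilon> ! j}" by simp
    qed
    then have "(\<Sum>j\<in>J. \<epsilon> ! j) = (\<Sum>j\<in>J. card {col\<in>{..<W}. Suc col \<le> \<epsilon> ! j})"
      by (intro sum.cong) auto
    also have "\<dots> = (\<Sum>col<W. card {j\<in>J. Suc col \<le> \<epsilon> ! j})"
      using card_swap[OF finJ, of "{..<W}" "\<lambda>j col. Suc col \<le> \<epsilon> ! j"] by simp
    finally show ?thesis .
  qed
  have bpos: "0 < b" using lt bdef by simp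
  then obtain j0 where "j0 \<in> J" using finJ unfolding b_def by (metis card_gt_0_iff equals0I)
  then have "v \<le> \<epsilon> ! j0" "j0 < length \<epsilon>" unfolding J_def by auto
  then have vW: "v - 1 < W" unfolding W_def using elem_le_sum_list[of j0 \<epsilon>] v by simp
  have termw: "\<And>col. col < W \<Longrightarrow> min b (cntge \<gamma> (Suc col)) \<le> card {j\<in>J. Suc col \<le> \<epsilon> ! j}"
  proof -
    fix col assume "col < W"
    show "min b (cntge \<gamma> (Suc col)) \<le> card {j\<in>J. Suc col \<le> \<epsilon> ! j}"
    proof (cases "Suc col \<le> v")
      case True
      then have "{j\<in>J. Suc col \<le> \<epsilon> ! j} = J" unfolding J_def by auto
      then show ?thesis unfolding b_def by simp
    next
      case False
      then have "{j\<in>J. Suc col \<le> \<epsilon> ! j} = {i. i < length \<epsilon> \<and> Suc col \<le> \<epsilon> ! i}" unfolding J_def by auto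
      then have "card {j\<in>J. Suc col \<le> \<epsilon> ! j} = cntge \<gamma> (Suc col)"
        using eqa False unfolding cntge_def by auto
      then show ?thesis by simp
    qed
  qed
  have strict: "min b (cntge \<gamma> (Suc (v - 1))) < card {j\<in>J. Suc (v - 1) \<le> \<epsilon> ! j}"
  proof -
    have "{j\<in>J. Suc (v - 1) \<le> \<epsilon> ! j} = J" unfolding J_def using v by auto
    moreover have "Suc (v - 1) = v" using v by simp
    ultimately show ?thesis using lt bdef unfolding b_def by simp
  qed
  have "(\<Sum>col<W. min b (cntge \<gamma> (Suc col))) < (\<Sum>col<W. card {j\<in>J. Suc col \<le> \<epsilon> ! j})"
    by (rule sum_strict_mono_ex1) (use termw strict vW in auto)
  with b1 a cc show False by simp
qed




lemma cntge_filter: "cntge l w = length (filter (\<lambda>x. w \<le> x) l)"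
  unfolding cntge_def by (simp add: length_filter_conv_card)

lemma cntge_perm: "cntge (part_of l) w = cntge l w"
  unfolding cntge_filter part_of_def
  by (simp add: rev_filter[symmetric] filter_sort)

lemma part_dec:
  assumes "i \<le> j" "j < length (part_of l)"
  shows "part_of l ! j \<le> part_of l ! i"
proof -
  have s: "sorted (sort l)" by simp
  have "part_of l ! j = sort l ! (length l - Suc j)" "part_of l ! i = sort l ! (length l - Suc i)"
    using assms unfolding part_of_def by (auto simp: rev_nth)
  moreover have "sort l ! (length l - Suc j) \<le> sort l ! (length l - Suc i)"
    using assms by (intro sorted_nth_mono[OF s]) (auto simp: part_of_def)
  ultimately show ?thesis by simp
qed

lemma cntge_nth0: "1 \<le> w \<Longrightarrow> cntge l w = card {i. w \<le> nth0 l i}"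
  unfolding cntge_def nth0_def by (rule arg_cong[where f=card]) auto

lemma nth0_dec:
  assumes dec: "\<forall>i j. i \<le> j \<longrightarrow> j < length p \<longrightarrow> p ! j \<le> p ! i" and "i \<le> j"
  shows "nth0 p j \<le> nth0 p i"
  using assms unfolding nth0_def by auto

lemma lex_dec_cnt:
  assumes dp: "\<forall>i j. i \<le> j \<longrightarrow> j < length p \<longrightarrow> p ! j \<le> p ! i"
    and dq: "\<forall>i j. i \<le> j \<longrightarrow> j < length q \<longrightarrow> q ! j \<le> q ! i"
    and lg: "lex_gt p q"
  shows "\<exists>v\<ge>1. (\<forall>w>v. cntge p w = cntge q w) \<and> cntge q v < cntge p v"
proof -
  obtain t where t: "\<forall>i<t. nth0 p i = nth0 q i" "nth0 q t < nth0 p t"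
    using lg unfolding lex_gt_def by blast
  define v where "v = nth0 p t"
  have v1: "1 \<le> v" using t unfolding v_def by simp
  have Sp: "\<And>w. v < w \<Longrightarrow> {i. w \<le> nth0 p i} = {i. i < t \<and> w \<le> nth0 p i}"
  proof -
    fix w assume "v < w"
    { fix i assume "t \<le> i" "w \<le> nth0 p i"
      then have False using nth0_dec[OF dp \<open>t \<le> i\<close>] \<open>v < w\<close> unfolding v_def by simp }
    then show "{i. w \<le> nth0 p i} = {i. i < t \<and> w \<le> nth0 p i}" by (intro Collect_cong) (meson not_less)
  qed
  have Sq: "\<And>w. nth0 q t < w \<Longrightarrow> {i. w \<le> nth0 q i} = {i. i < t \<and> w \<le> nth0 q i}"
  proof -
    fix w assume "nth0 q t < w"
    { fix i assume "t \<le> i" "w \<le> nth0 q i"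
      then have False using nth0_dec[OF dq \<open>t \<le> i\<close>] \<open>nth0 q t < w\<close> by simp }
    then show "{i. w \<le> nth0 q i} = {i. i < t \<and> w \<le> nth0 q i}" by (intro Collect_cong) (meson not_less)
  qed
  have same: "\<And>w. {i. i < t \<and> w \<le> nth0 q i} = {i. i < t \<and> w \<le> nth0 p i}" using t(1) by auto
  show ?thesis
  proof (intro exI conjI allI impI)
    show "1 \<le> v" by (rule v1)
  next
    fix w assume "v < w"
    then have "nth0 q t < w" using t unfolding v_def by simp
    then show "cntge p w = cntge q w"
      using cntge_nth0[of w] v1 \<open>v < w\<close> Sp[OF \<open>v < w\<close>] Sq same by simp
  next
    have fin: "finite {i. v \<le> nth0 p i}"
      by (rule finite_subset[of _ "{..<length p}"]) (use v1 in \<open>auto simp: nth0_def split: if_splits\<close>)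
    have "{i. v \<le> nth0 q i} = {i. i < t \<and> v \<le> nth0 p i}"
      using Sq[of v] t same unfolding v_def by simp
    also have "\<dots> \<subset> {i. v \<le> nth0 p i}" unfolding v_def by auto
    finally have "card {i. v \<le> nth0 q i} < card {i. v \<le> nth0 p i}" using fin by (rule psubset_card_mono[rotated])
    then show "cntge q v < cntge p v" using cntge_nth0 v1 by simp
  qed
qed

lemma lex_part_cnt:
  assumes "lex_gt (part_of \<epsilon>) (part_of \<gamma>)"
  shows "\<exists>v\<ge>1. (\<forall>w>v. cntge \<epsilon> w = cntge \<gamma> w) \<and> cntge \<gamma> v < cntge \<epsilon> v"
  using lex_dec_cnt[OF _ _ assms] part_dec cntge_perm by metis

section \<open>Equal partitions\<close>

lemma first_col:
  assumes T: "T \<in> comp_tableaux n \<gamma>" and c: "\<forall>m. nth0 \<epsilon> m = content \<gamma> T m"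
    and len: "length \<epsilon> = length \<gamma>" and comp: "is_comp \<gamma>" and i: "i < length \<gamma>"
  shows "T i 0 = Suc i"
proof -
  have pos: "\<And>i. i < length \<gamma> \<Longrightarrow> (i, 0) \<in> cells \<gamma>"
    using comp unfolding is_comp_def by (auto simp: nth_mem)
  have A: "\<And>i. i < length \<gamma> \<Longrightarrow> Suc i \<le> T i 0"
  proof -
    fix i show "i < length \<gamma> \<Longrightarrow> Suc i \<le> T i 0"
    proof (induction i)
      case 0 then show ?case using tabD(2)[OF T pos] by simp
    next
      case (Suc i)
      then have "T i 0 < T (Suc i) 0" using tabD(4)[OF T, of i "Suc i"] by simp
      then show ?case using Suc by simp
    qed
  qed
  have B: "\<And>d. i + d < length \<gamma> \<Longrightarrow> T i 0 + d \<le> T (i + d) 0"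
  proof -
    fix d show "i + d < length \<gamma> \<Longrightarrow> T i 0 + d \<le> T (i + d) 0"
    proof (induction d)
      case 0 then show ?case by simp
    next
      case (Suc d)
      then have "T (i + d) 0 < T (i + Suc d) 0" using tabD(4)[OF T, of "i + d" "i + Suc d"] by simp
      then show ?case using Suc by simp
    qed
  qed
  define d where "d = length \<gamma> - 1 - i"
  have "i + d < length \<gamma>" using i unfolding d_def by simp
  then have "T i 0 + d \<le> T (i + d) 0" by (rule B)
  also have "\<dots> \<le> length \<epsilon>" using tab_vals[OF T c pos[OF \<open>i + d < length \<gamma>\<close>]] by simp
  finally have "T i 0 \<le> Suc i" using len i unfolding d_def by simp
  with A[OF i] show ?thesis by simp
qed

lemma val_le_row:
  assumes T: "T \<in> comp_tableaux n \<gamma>" and c: "\<forall>m. nth0 \<epsilon> m = content \<gamma> T m"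
    and len: "length \<epsilon> = length \<gamma>" and comp: "is_comp \<gamma>" and cell: "(i, j) \<in> cells \<gamma>"
  shows "T i j \<le> Suc i"
proof -
  have "i < length \<gamma>" "j < \<gamma> ! i" using cell by auto
  then have "T i j \<le> T i 0" using row_mono[OF T, of i 0 j] by simp
  then show ?thesis using first_col[OF T c len comp \<open>i < length \<gamma>\<close>] by simp
qed

lemma row_step:
  assumes T: "T \<in> comp_tableaux n \<gamma>" and c: "\<forall>m. nth0 \<epsilon> m = content \<gamma> T m"
    and len: "length \<epsilon> = length \<gamma>" and comp: "is_comp \<gamma>" and r: "r < length \<gamma>"
    and above: "\<forall>i j. r < i \<and> i < length \<gamma> \<and> j < \<gamma> ! i \<longrightarrow> T i j = Suc i"
  shows "\<epsilon> ! r \<le> \<gamma> ! r \<and> (\<epsilon> ! r = \<gamma> ! r \<longrightarrow> (\<forall>j < \<gamma> ! r. T r j = Suc r))"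
proof -
  define S where "S = {c \<in> cells \<gamma>. case_prod T c = Suc r}"
  have er: "\<epsilon> ! r = card S" using c[rule_format, of r] r len unfolding S_def content_def nth0_def by simp
  have sub: "S \<subseteq> {r} \<times> {..<\<gamma> ! r}"
  proof
    fix x assume x: "x \<in> S"
    obtain i j where xij: "x = (i, j)" by (cases x)
    have cell: "(i, j) \<in> cells \<gamma>" and v: "T i j = Suc r" using x xij unfolding S_def by auto
    have "r \<le> i" using val_le_row[OF T c len comp cell] v by simp
    moreover have "\<not> r < i" using above cell v by auto
    ultimately have "i = r" by simp
    then show "x \<in> {r} \<times> {..<\<gamma> ! r}" using cell xij by auto
  qed
  have cardR: "card ({r} \<times> {..<\<gamma> ! r}) = \<gamma> ! r" by simp
  have le: "\<epsilon> ! r \<le> \<gamma> ! r" using card_mono[OF _ sub] er cardR by simp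
  moreover have "\<epsilon> ! r = \<gamma> ! r \<longrightarrow> (\<forall>j < \<gamma> ! r. T r j = Suc r)"
  proof (intro impI allI)
    fix j assume eq: "\<epsilon> ! r = \<gamma> ! r" and j: "j < \<gamma> ! r"
    have "S = {r} \<times> {..<\<gamma> ! r}" using card_subset_eq[OF _ sub] er eq cardR by simp
    then have "(r, j) \<in> S" using j by auto
    then show "T r j = Suc r" unfolding S_def by simp
  qed
  ultimately show ?thesis by blast
qed

lemma rows_from:
  assumes T: "T \<in> comp_tableaux n \<gamma>" and c: "\<forall>m. nth0 \<epsilon> m = content \<gamma> T m"
    and len: "length \<epsilon> = length \<gamma>" and comp: "is_comp \<gamma>"
  shows "r + d = length \<gamma> \<Longrightarrow> \<forall>i. r \<le> i \<and> i < length \<gamma> \<longrightarrow> \<epsilon> ! i = \<gamma> ! i \<Longrightarrow>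
     \<forall>i j. r \<le> i \<and> i < length \<gamma> \<and> j < \<gamma> ! i \<longrightarrow> T i j = Suc i"
proof (induction d arbitrary: r)
  case 0 then show ?case by auto
next
  case (Suc d)
  have IH: "\<forall>i j. Suc r \<le> i \<and> i < length \<gamma> \<and> j < \<gamma> ! i \<longrightarrow> T i j = Suc i"
    using Suc.IH[of "Suc r"] Suc.prems by auto
  have r: "r < length \<gamma>" using Suc.prems by simp
  have "\<forall>j < \<gamma> ! r. T r j = Suc r"
    using row_step[OF T c len comp r] IH Suc.prems r by auto
  then show ?case using IH by (metis le_eq_less_or_eq Suc_le_eq)
qed

lemma partB_rev:
  assumes T: "T \<in> comp_tableaux n \<gamma>" and c: "\<forall>m. nth0 \<epsilon> m = content \<gamma> T m"
    and len: "length \<epsilon> = length \<gamma>" and comp: "is_comp \<gamma>"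
  shows "\<not> lex_gt (rev \<epsilon>) (rev \<gamma>)"
proof
  assume "lex_gt (rev \<epsilon>) (rev \<gamma>)"
  then obtain t where t: "\<forall>i<t. nth0 (rev \<epsilon>) i = nth0 (rev \<gamma>) i" "nth0 (rev \<gamma>) t < nth0 (rev \<epsilon>) t"
    unfolding lex_gt_def by blast
  define k where "k = length \<gamma>"
  have tk: "t < k" using t(2) len unfolding nth0_def k_def by (auto split: if_splits)
  define r where "r = k - 1 - t"
  have rk: "r < k" using tk unfolding r_def by simp
  have nr: "\<And>l s. length l = k \<Longrightarrow> s < k \<Longrightarrow> nth0 (rev l) s = l ! (k - 1 - s)"
    unfolding nth0_def by (auto simp: rev_nth)
  have eqs: "\<forall>i. Suc r \<le> i \<and> i < k \<longrightarrow> \<epsilon> ! i = \<gamma> ! i"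
  proof (intro allI impI)
    fix i assume i: "Suc r \<le> i \<and> i < k"
    define s where "s = k - 1 - i"
    have "s < t" "s < k" using i tk unfolding s_def r_def by auto
    then have "nth0 (rev \<epsilon>) s = nth0 (rev \<gamma>) s" using t(1) by simp
    moreover have "k - 1 - s = i" using i unfolding s_def by simp
    ultimately show "\<epsilon> ! i = \<gamma> ! i" using nr[of \<epsilon> s] nr[of \<gamma> s] len \<open>s < k\<close> unfolding k_def by simp
  qed
  have above: "\<forall>i j. r < i \<and> i < length \<gamma> \<and> j < \<gamma> ! i \<longrightarrow> T i j = Suc i"
    using rows_from[OF T c len comp, of "Suc r" "k - Suc r"] eqs rk unfolding k_def by auto
  have "\<epsilon> ! r \<le> \<gamma> ! r" using row_step[OF T c len comp _ above] rk unfolding k_def by simp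
  moreover have "k - 1 - t = r" unfolding r_def by simp
  then have "\<gamma> ! r < \<epsilon> ! r" using t(2) nr[of \<epsilon> t] nr[of \<gamma> t] tk len unfolding k_def by simp
  ultimately show False by simp
qed

definition T0 :: "nat list \<Rightarrow> nat \<Rightarrow> nat \<Rightarrow> nat" where
  "T0 \<gamma> i j = (if (i, j) \<in> cells \<gamma> then Suc i else 0)"

lemma T0_unique:
  assumes T: "T \<in> comp_tableaux n \<gamma>" and c: "\<forall>m. nth0 \<gamma> m = content \<gamma> T m" and comp: "is_comp \<gamma>"
  shows "T = T0 \<gamma>"
proof (intro ext)
  fix i j
  have "\<forall>i j. 0 \<le> i \<and> i < length \<gamma> \<and> j < \<gamma> ! i \<longrightarrow> T i j = Suc i"
    using rows_from[OF T c refl comp, of 0 "length \<gamma>"] by simp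
  then show "T i j = T0 \<gamma> i j" unfolding T0_def using tabD(1)[OF T] by auto
qed

lemma T0_tab:
  assumes comp: "is_comp \<gamma>" and l: "length \<gamma> \<le> n"
  shows "T0 \<gamma> \<in> comp_tableaux n \<gamma>" and "\<forall>m. nth0 \<gamma> m = content \<gamma> (T0 \<gamma>) m"
proof -
  show "T0 \<gamma> \<in> comp_tableaux n \<gamma>"
  proof -
    have pos: "\<And>i. i < length \<gamma> \<Longrightarrow> 0 < \<gamma> ! i" using comp unfolding is_comp_def by (simp add: nth_mem)
    show ?thesis unfolding comp_tableaux_def T0_def using l pos by auto
  qed
  show "\<forall>m. nth0 \<gamma> m = content \<gamma> (T0 \<gamma>) m"
  proof
    fix m
    show "nth0 \<gamma> m = content \<gamma> (T0 \<gamma>) m"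
    proof (cases "m < length \<gamma>")
      case True
      have "{c \<in> cells \<gamma>. case_prod (T0 \<gamma>) c = Suc m} = {m} \<times> {..<\<gamma> ! m}"
        unfolding T0_def using True by auto
      then show ?thesis unfolding content_def nth0_def using True by simp
    next
      case False
      have "{c \<in> cells \<gamma>. case_prod (T0 \<gamma>) c = Suc m} = {}"
        unfolding T0_def using False by auto
      then show ?thesis unfolding content_def nth0_def using False by simp
    qed
  qed
qed

lemma S_diag:
  assumes comp: "is_comp \<gamma>" and l: "length \<gamma> \<le> n"
  shows "S_coeff n \<gamma> (nth0 \<gamma>) = 1"
proof -
  have "{T \<in> comp_tableaux n \<gamma>. \<forall>m. nth0 \<gamma> m = content \<gamma> T m} = {T0 \<gamma>}"
    using T0_tab[OF comp l] T0_unique[OF _ _ comp] by blast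
  then show ?thesis unfolding S_coeff_alt by simp
qed

lemma part_pos: "is_comp l \<Longrightarrow> \<forall>a\<in>set (part_of l). 0 < a"
  unfolding part_of_def is_comp_def by simp

lemma S_tri:
  assumes cg: "is_comp \<gamma>" and ce: "is_comp \<epsilon>" and lg: "length \<gamma> \<le> n" and le: "length \<epsilon> \<le> n"
    and nz: "S_coeff n \<gamma> (nth0 \<epsilon>) \<noteq> 0"
  shows "\<gamma> = \<epsilon> \<or> revlex_gt \<gamma> \<epsilon>"
proof -
  obtain T where T: "T \<in> comp_tableaux n \<gamma>" and c: "\<forall>m. nth0 \<epsilon> m = content \<gamma> T m"
  proof -
    have "{T \<in> comp_tableaux n \<gamma>. \<forall>m. nth0 \<epsilon> m = content \<gamma> T m} \<noteq> {}"
      using nz unfolding S_coeff_alt by (metis card.empty)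
    then show ?thesis using that by blast
  qed
  have sz: "sum_list \<epsilon> = sum_list \<gamma>" by (rule tab_size[OF T c le])
  have nlt: "\<not> lex_gt (part_of \<epsilon>) (part_of \<gamma>)"
  proof
    assume "lex_gt (part_of \<epsilon>) (part_of \<gamma>)"
    then obtain v where "1 \<le> v" "\<forall>w>v. cntge \<epsilon> w = cntge \<gamma> w" "cntge \<gamma> v < cntge \<epsilon> v"
      using lex_part_cnt by blast
    then show False using dominance_contra[OF T c] by blast
  qed
  show ?thesis
  proof (cases "lex_gt (part_of \<gamma>) (part_of \<epsilon>)")
    case True
    then show ?thesis unfolding revlex_gt_def using cg ce sz by simp
  next
    case False
    then have "\<forall>i. nth0 (part_of \<gamma>) i = nth0 (part_of \<epsilon>) i" using nlt lex_gt_total by blast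
    then have peq: "part_of \<gamma> = part_of \<epsilon>" using nth0_eq_list_eq part_pos cg ce by blast
    then have len: "length \<epsilon> = length \<gamma>" unfolding part_of_def by (metis length_rev length_sort)
    have nr: "\<not> lex_gt (rev \<epsilon>) (rev \<gamma>)" by (rule partB_rev[OF T c len cg])
    show ?thesis
    proof (cases "lex_gt (rev \<gamma>) (rev \<epsilon>)")
      case True
      then show ?thesis unfolding revlex_gt_def using cg ce sz peq by simp
    next
      case False
      then have "\<forall>i. nth0 (rev \<gamma>) i = nth0 (rev \<epsilon>) i" using nr lex_gt_total by blast
      moreover have "\<forall>a\<in>set (rev \<gamma>). 0 < a" "\<forall>a\<in>set (rev \<epsilon>). 0 < a" using cg ce unfolding is_comp_def by auto
      ultimately have "rev \<gamma> = rev \<epsilon>" using nth0_eq_list_eq by blast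
      then show ?thesis by simp
    qed
  qed
qed




definition relabel :: "nat list \<Rightarrow> (nat \<Rightarrow> nat) \<Rightarrow> (nat \<Rightarrow> nat \<Rightarrow> nat) \<Rightarrow> nat \<Rightarrow> nat \<Rightarrow> nat" where
  "relabel \<gamma> f T = (\<lambda>i j. if (i, j) \<in> cells \<gamma> then f (T i j) else 0)"

lemma relabel_tab:
  assumes T: "T \<in> comp_tableaux n \<gamma>"
    and mono: "\<forall>x\<in>V. \<forall>y\<in>V. x < y \<longrightarrow> f x < f y"
    and V: "\<forall>i j. (i, j) \<in> cells \<gamma> \<longrightarrow> T i j \<in> V"
    and rng: "\<forall>x\<in>V. 1 \<le> f x \<and> f x \<le> n'"
  shows "relabel \<gamma> f T \<in> comp_tableaux n' \<gamma>"
proof -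
  have lt: "\<And>a b c d. (a, b) \<in> cells \<gamma> \<Longrightarrow> (c, d) \<in> cells \<gamma> \<Longrightarrow> T a b < T c d \<Longrightarrow> f (T a b) < f (T c d)"
    using mono V by blast
  have le: "\<And>a b c d. (a, b) \<in> cells \<gamma> \<Longrightarrow> (c, d) \<in> cells \<gamma> \<Longrightarrow> T a b \<le> T c d \<Longrightarrow> f (T a b) \<le> f (T c d)"
    using lt by (metis order_le_less)
  let ?R = "relabel \<gamma> f T"
  have c1: "\<forall>i j. (i, j) \<notin> cells \<gamma> \<longrightarrow> ?R i j = 0" unfolding relabel_def by simp
  have c2: "\<forall>i j. (i, j) \<in> cells \<gamma> \<longrightarrow> 1 \<le> ?R i j \<and> ?R i j \<le> n'"
    unfolding relabel_def using V rng by simp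
  have c3: "\<forall>i j. i < length \<gamma> \<and> Suc j < \<gamma> ! i \<longrightarrow> ?R i (Suc j) \<le> ?R i j"
  proof (intro allI impI)
    fix i j assume a: "i < length \<gamma> \<and> Suc j < \<gamma> ! i"
    then show "?R i (Suc j) \<le> ?R i j" unfolding relabel_def using le[of i "Suc j" i j] tabD(3)[OF T] by simp
  qed
  have c4: "\<forall>i i'. i < i' \<and> i' < length \<gamma> \<longrightarrow> ?R i 0 < ?R i' 0"
  proof (intro allI impI)
    fix i i' assume a: "i < i' \<and> i' < length \<gamma>"
    have T0: "\<And>a. (a, 0) \<notin> cells \<gamma> \<Longrightarrow> T a 0 = 0" using tabD(1)[OF T] by blast
    have pi': "0 < \<gamma> ! i'"
    proof (rule ccontr)
      assume "\<not> 0 < \<gamma> ! i'"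
      then have "T i' 0 = 0" using T0[of i'] by simp
      then show False using tabD(4)[OF T, of i i'] a by simp
    qed
    have ci': "(i', 0) \<in> cells \<gamma>" using pi' a by simp
    show "?R i 0 < ?R i' 0"
    proof (cases "0 < \<gamma> ! i")
      case True
      then have ci: "(i, 0) \<in> cells \<gamma>" using a by simp
      show ?thesis unfolding relabel_def using lt[OF ci ci'] tabD(4)[OF T] a ci ci' by simp
    next
      case False
      then have "(i, 0) \<notin> cells \<gamma>" by simp
      then show ?thesis unfolding relabel_def using ci' V rng by fastforce
    qed
  qed
  have c5: "\<forall>i j k. i < j \<and> j < length \<gamma> \<and> k < \<gamma> ! i \<and> k < \<gamma> ! j \<longrightarrow>
        ((\<gamma> ! j \<le> \<gamma> ! i \<and> 1 \<le> k \<longrightarrow> ?R j k < ?R i k \<or> ?R i (k - 1) < ?R j k)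
       \<and> (\<gamma> ! i < \<gamma> ! j \<longrightarrow> ?R j k < ?R i k \<or> ?R i k < ?R j (Suc k)))"
  proof (intro allI impI conjI)
    fix i j k assume a: "i < j \<and> j < length \<gamma> \<and> k < \<gamma> ! i \<and> k < \<gamma> ! j"
    have il: "i < length \<gamma>" using a by simp
    {
      assume b: "\<gamma> ! j \<le> \<gamma> ! i \<and> 1 \<le> k"
      have ci: "(i, k - 1) \<in> cells \<gamma>" using a il by (simp add: less_imp_diff_less)
      have "T j k < T i k \<or> T i (k - 1) < T j k" using tabD(5)[OF T] a b by blast
      then show "?R j k < ?R i k \<or> ?R i (k - 1) < ?R j k"
        unfolding relabel_def using lt[of j k i k] lt[of i "k - 1" j k] a il ci by auto
    }
    {
      assume b: "\<gamma> ! i < \<gamma> ! j"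
      have cj: "(j, Suc k) \<in> cells \<gamma>" using a b by simp
      have "T j k < T i k \<or> T i k < T j (Suc k)" using tabD(6)[OF T] a b by blast
      then show "?R j k < ?R i k \<or> ?R i k < ?R j (Suc k)"
        unfolding relabel_def using lt[of j k i k] lt[of i k j "Suc k"] a il cj by auto
    }
  qed
  show ?thesis unfolding comp_tableaux_def using c1 c2 c3 c4 c5 by (simp only: mem_Collect_eq)
qed

lemma content_relabel:
  "content \<gamma> (relabel \<gamma> f T) m = card {c \<in> cells \<gamma>. f (case_prod T c) = Suc m}"
  unfolding content_def relabel_def by (rule arg_cong[where f=card]) auto

lemma S_zero_out:
  assumes "e m \<noteq> 0" "n \<le> m"
  shows "S_coeff n \<gamma> e = 0"
proof -
  have "{T \<in> comp_tableaux n \<gamma>. \<forall>m. e m = content \<gamma> T m} = {}"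
  proof (rule ccontr)
    assume "{T \<in> comp_tableaux n \<gamma>. \<forall>m. e m = content \<gamma> T m} \<noteq> {}"
    then obtain T where T: "T \<in> comp_tableaux n \<gamma>" "e m = content \<gamma> T m" by blast
    have "{c \<in> cells \<gamma>. case_prod T c = Suc m} = {}"
      using tabD(2)[OF T(1)] assms by fastforce
    then show False using T assms unfolding content_def by simp
  qed
  then show ?thesis unfolding S_coeff_alt by (metis card.empty)
qed

lemma M_zero_out:
  assumes "e m \<noteq> 0" "n \<le> m"
  shows "M_coeff n \<beta> e = 0"
proof -
  have "{is. length is = length \<beta> \<and> sorted_wrt (<) is \<and> (\<forall>i\<in>set is. i < n)
      \<and> (\<forall>m. e m = (\<Sum>j<length \<beta>. if is ! j = m then \<beta> ! j else 0))} = {}"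
  proof (rule ccontr)
    assume "\<not> ?thesis"
    then obtain "is" where i: "length is = length \<beta>" "\<forall>i\<in>set is. i < n"
      "e m = (\<Sum>j<length \<beta>. if is ! j = m then \<beta> ! j else 0)" by blast
    have "(\<Sum>j<length \<beta>. if is ! j = m then \<beta> ! j else 0) = 0"
    proof (intro sum.neutral ballI)
      fix x assume "x \<in> {..<length \<beta>}"
      then have "is ! x < n" using i(1,2) nth_mem by fastforce
      then show "(if is ! x = m then \<beta> ! x else 0) = 0" using assms(2) by simp
    qed
    then show False using i(3) assms(1) by simp
  qed
  then show ?thesis unfolding M_coeff_def by (metis card.empty)
qed

lemma sum_distinct_delta:
  assumes "distinct xs" "j0 < length xs"
  shows "(\<Sum>j<length xs. if xs ! j = xs ! j0 then f j else 0) = (f j0 :: nat)"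
proof -
  have "(\<Sum>j<length xs. if xs ! j = xs ! j0 then f j else 0) = (\<Sum>j<length xs. if j = j0 then f j else 0)"
    using assms by (intro sum.cong) (auto simp: nth_eq_iff_index_eq)
  also have "\<dots> = f j0" using assms by simp
  finally show ?thesis .
qed

lemma M_coeff_char:
  assumes comp: "is_comp \<beta>" and P: "sorted_wrt (<) P" and setP: "set P = {m. e m \<noteq> 0}"
    and Pn: "\<forall>m\<in>set P. m < n"
  shows "M_coeff n \<beta> e = (if \<beta> = map e P then 1 else 0)"
proof -
  let ?S = "{is. length is = length \<beta> \<and> sorted_wrt (<) is \<and> (\<forall>i\<in>set is. i < n)
      \<and> (\<forall>m. e m = (\<Sum>j<length \<beta>. if is ! j = m then \<beta> ! j else 0))}"
  have distP: "distinct P" using P by (simp add: strict_sorted_iff)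
  have one: "\<And>is. is \<in> ?S \<Longrightarrow> is = P \<and> \<beta> = map e P"
  proof -
    fix "is" assume "is \<in> ?S"
    then have l: "length is = length \<beta>" and s: "sorted_wrt (<) is" and em: "\<forall>m. e m = (\<Sum>j<length \<beta>. if is ! j = m then \<beta> ! j else 0)"
      by auto
    have dis: "distinct is" using s by (simp add: strict_sorted_iff)
    have pos: "\<And>j. j < length \<beta> \<Longrightarrow> 0 < \<beta> ! j" using comp unfolding is_comp_def by (simp add: nth_mem)
    have "set is = {m. e m \<noteq> 0}"
    proof (intro set_eqI iffI)
      fix m assume "m \<in> set is"
      then obtain j0 where j0: "j0 < length is" "is ! j0 = m" by (auto simp: in_set_conv_nth)
      have "e m = \<beta> ! j0" using em sum_distinct_delta[OF dis j0(1), of "\<lambda>j. \<beta> ! j"] j0 l by simp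
      then show "m \<in> {m. e m \<noteq> 0}" using pos j0 l by simp
    next
      fix m assume "m \<in> {m. e m \<noteq> 0}"
      then have "(\<Sum>j<length \<beta>. if is ! j = m then \<beta> ! j else 0) \<noteq> 0" using em by simp
      then have "\<exists>j\<in>{..<length \<beta>}. (if is ! j = m then \<beta> ! j else 0) \<noteq> 0"
      proof (rule contrapos_np)
        assume "\<not> (\<exists>j\<in>{..<length \<beta>}. (if is ! j = m then \<beta> ! j else 0) \<noteq> 0)"
        then have "\<forall>j\<in>{..<length \<beta>}. (if is ! j = m then \<beta> ! j else 0) = 0" by blast
        then show "(\<Sum>j<length \<beta>. if is ! j = m then \<beta> ! j else 0) = 0" by (rule sum.neutral)
      qed
      then obtain j where "j < length \<beta>" "is ! j = m" by (auto split: if_splits)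
      then show "m \<in> set is" using l by (auto simp: in_set_conv_nth)
    qed
    then have isP: "is = P" using strict_sorted_equal[OF P s] setP by simp
    have "\<beta> = map e P"
    proof (rule nth_equalityI)
      show "length \<beta> = length (map e P)" using l isP by simp
    next
      fix j assume "j < length \<beta>"
      then have "e (is ! j) = \<beta> ! j" using em sum_distinct_delta[OF dis, of j "\<lambda>j. \<beta> ! j"] l by simp
      then show "\<beta> ! j = map e P ! j" using isP l \<open>j < length \<beta>\<close> by simp
    qed
    then show "is = P \<and> \<beta> = map e P" using isP by simp
  qed
  show ?thesis
  proof (cases "\<beta> = map e P")
    case True
    have "P \<in> ?S"
    proof -
      have "\<forall>m. e m = (\<Sum>j<length P. if P ! j = m then e (P ! j) else 0)"
      proof
        fix m show "e m = (\<Sum>j<length P. if P ! j = m then e (P ! j) else 0)"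
        proof (cases "m \<in> set P")
          case True
          then obtain j0 where j0: "j0 < length P" "P ! j0 = m" by (auto simp: in_set_conv_nth)
          then show ?thesis using sum_distinct_delta[OF distP j0(1), of "\<lambda>j. e (P ! j)"] by simp
        next
          case False
          then have "e m = 0" using setP by auto
          moreover have "(\<Sum>j<length P. if P ! j = m then e (P ! j) else 0) = 0"
            using False by (intro sum.neutral) (auto simp: nth_mem)
          ultimately show ?thesis by simp
        qed
      qed
      moreover have "\<forall>m. (\<Sum>j<length P. if P ! j = m then e (P ! j) else 0) = (\<Sum>j<length \<beta>. if P ! j = m then \<beta> ! j else 0)"
        using True by (auto intro!: sum.cong)
      ultimately have "\<forall>m. e m = (\<Sum>j<length \<beta>. if P ! j = m then \<beta> ! j else 0)" by simp
      then show ?thesis using True P Pn by simp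
    qed
    then have "?S = {P}" using one by blast
    then show ?thesis unfolding M_coeff_def using True by simp
  next
    case False
    then have "?S = {}" using one by blast
    then have "card ?S = 0" by (metis card.empty)
    then show ?thesis unfolding M_coeff_def using False by simp
  qed
qed




lemma S_qsym:
  assumes P: "sorted_wrt (<) P" and setP: "set P = {m. e m \<noteq> 0}" and Pn: "\<forall>m\<in>set P. m < n"
  shows "S_coeff n \<gamma> e = S_coeff n \<gamma> (nth0 (map e P))"
proof -
  define k where "k = length P"
  have distP: "distinct P" and sortP: "sorted P" using P by (auto simp: strict_sorted_iff)
  have bij: "bij_betw ((!) P) {..<k} (set P)" using bij_betw_nth[OF distP] unfolding k_def by simp
  have inj: "inj_on ((!) P) {..<k}" using bij by (rule bij_betw_imp_inj_on)
  have img: "(!) P ` {..<k} = set P" using bij by (rule bij_betw_imp_surj_on)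
  define idx where "idx = the_inv_into {..<k} ((!) P)"
  have I1: "\<And>m. m \<in> set P \<Longrightarrow> idx m < k \<and> P ! idx m = m"
    unfolding idx_def using the_inv_into_into[OF inj, of _ "{..<k}"] f_the_inv_into_f[OF inj] img by auto
  have I2: "\<And>j. j < k \<Longrightarrow> idx (P ! j) = j"
    unfolding idx_def using the_inv_into_f_f[OF inj] by simp
  have monoP: "\<And>i j. i < j \<Longrightarrow> j < k \<Longrightarrow> P ! i < P ! j"
    using sorted_wrt_nth_less[OF P] unfolding k_def by blast
  have mono_idx: "\<And>m1 m2. m1 \<in> set P \<Longrightarrow> m2 \<in> set P \<Longrightarrow> m1 < m2 \<Longrightarrow> idx m1 < idx m2"
  proof (rule ccontr)
    fix m1 m2 assume a: "m1 \<in> set P" "m2 \<in> set P" "m1 < m2" "\<not> idx m1 < idx m2"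
    then have "P ! idx m2 \<le> P ! idx m1"
      using sorted_nth_mono[OF sortP, of "idx m2" "idx m1"] I1 unfolding k_def by simp
    then show False using I1 a by simp
  qed
  have kn: "k \<le> n"
  proof -
    have "card (set P) = k" using distP unfolding k_def by (simp add: distinct_card)
    moreover have "card (set P) \<le> card {..<n}" using Pn by (intro card_mono) auto
    ultimately show ?thesis by simp
  qed
  define e' where "e' = nth0 (map e P)"
  have e'_def2: "\<And>j. e' j = (if j < k then e (P ! j) else 0)" unfolding e'_def nth0_def k_def by simp
  define \<phi> where "\<phi> = (\<lambda>v. Suc (idx (v - 1)))"
  define \<psi> where "\<psi> = (\<lambda>v. Suc (P ! (v - 1)))"
  define A where "A = {T \<in> comp_tableaux n \<gamma>. \<forall>m. e m = content \<gamma> T m}"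
  define B where "B = {T \<in> comp_tableaux n \<gamma>. \<forall>m. e' m = content \<gamma> T m}"
  define F where "F = relabel \<gamma> \<phi>"
  define G where "G = relabel \<gamma> \<psi>"
  have valsA: "\<And>T i j. T \<in> A \<Longrightarrow> (i, j) \<in> cells \<gamma> \<Longrightarrow> \<exists>m. T i j = Suc m \<and> m \<in> set P"
  proof -
    fix T i j assume T: "T \<in> A" and c: "(i, j) \<in> cells \<gamma>"
    obtain m where m: "T i j = Suc m" "0 < content \<gamma> T m"
      using content_pos_val[of T n \<gamma> i j] T c unfolding A_def by blast
    then have "e m \<noteq> 0" using T unfolding A_def by simp
    then show "\<exists>m. T i j = Suc m \<and> m \<in> set P" using m setP by auto
  qed
  have valsB: "\<And>T i j. T \<in> B \<Longrightarrow> (i, j) \<in> cells \<gamma> \<Longrightarrow> 1 \<le> T i j \<and> T i j \<le> k"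
  proof -
    fix T i j assume T: "T \<in> B" and c: "(i, j) \<in> cells \<gamma>"
    have "T \<in> comp_tableaux n \<gamma>" "\<forall>m. nth0 (map e P) m = content \<gamma> T m"
      using T unfolding B_def e'_def by auto
    from tab_vals[OF this c] show "1 \<le> T i j \<and> T i j \<le> k" unfolding k_def by simp
  qed
  have FA: "\<And>T. T \<in> A \<Longrightarrow> F T \<in> B \<and> G (F T) = T"
  proof -
    fix T assume T: "T \<in> A"
    have Tt: "T \<in> comp_tableaux n \<gamma>" using T unfolding A_def by simp
    have tab: "F T \<in> comp_tableaux n \<gamma>" unfolding F_def
    proof (rule relabel_tab[OF Tt, where V = "Suc ` set P"])
      show "\<forall>x\<in>Suc ` set P. \<forall>y\<in>Suc ` set P. x < y \<longrightarrow> \<phi> x < \<phi> y"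
        unfolding \<phi>_def using mono_idx by auto
      show "\<forall>i j. (i, j) \<in> cells \<gamma> \<longrightarrow> T i j \<in> Suc ` set P" using valsA[OF T] by blast
      show "\<forall>x\<in>Suc ` set P. 1 \<le> \<phi> x \<and> \<phi> x \<le> n" unfolding \<phi>_def using I1 kn by force
    qed
    have cont: "\<forall>j. e' j = content \<gamma> (F T) j"
    proof
      fix j
      show "e' j = content \<gamma> (F T) j"
      proof (cases "j < k")
        case True
        have "{c \<in> cells \<gamma>. \<phi> (case_prod T c) = Suc j} = {c \<in> cells \<gamma>. case_prod T c = Suc (P ! j)}"
        proof (intro Collect_cong conj_cong refl)
          fix c assume "c \<in> cells \<gamma>"
          then obtain m where m: "case_prod T c = Suc m" "m \<in> set P" using valsA[OF T] by (cases c) auto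
          show "(\<phi> (case_prod T c) = Suc j) = (case_prod T c = Suc (P ! j))"
            unfolding \<phi>_def using m I1[OF m(2)] I2[OF True] by auto
        qed
        then show ?thesis unfolding F_def content_relabel using T True e'_def2 unfolding A_def content_def
          by simp
      next
        case False
        have "{c \<in> cells \<gamma>. \<phi> (case_prod T c) = Suc j} = {}"
        proof -
          { fix c assume "c \<in> cells \<gamma>" "\<phi> (case_prod T c) = Suc j"
            then obtain m where m: "case_prod T c = Suc m" "m \<in> set P" using valsA[OF T] by (cases c) auto
            then have False using I1[OF m(2)] False \<open>\<phi> (case_prod T c) = Suc j\<close> unfolding \<phi>_def by auto }
          then show ?thesis by blast
        qed
        then show ?thesis unfolding F_def content_relabel using False e'_def2 by simp
      qed
    qed
    have inv: "G (F T) = T"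
    proof (intro ext)
      fix i j
      show "G (F T) i j = T i j"
      proof (cases "(i, j) \<in> cells \<gamma>")
        case True
        then obtain m where m: "T i j = Suc m" "m \<in> set P" using valsA[OF T] by blast
        then show ?thesis unfolding G_def F_def relabel_def \<psi>_def \<phi>_def using True I1[OF m(2)] by simp
      next
        case False
        then show ?thesis unfolding G_def F_def relabel_def using tabD(1)[OF Tt] by auto
      qed
    qed
    show "F T \<in> B \<and> G (F T) = T" using tab cont inv unfolding B_def by simp
  qed
  have GB: "\<And>T. T \<in> B \<Longrightarrow> G T \<in> A \<and> F (G T) = T"
  proof -
    fix T assume T: "T \<in> B"
    have Tt: "T \<in> comp_tableaux n \<gamma>" using T unfolding B_def by simp
    have tab: "G T \<in> comp_tableaux n \<gamma>" unfolding G_def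
    proof (rule relabel_tab[OF Tt, where V = "{1..k}"])
      show "\<forall>x\<in>{1..k}. \<forall>y\<in>{1..k}. x < y \<longrightarrow> \<psi> x < \<psi> y"
        unfolding \<psi>_def using monoP by auto
      show "\<forall>i j. (i, j) \<in> cells \<gamma> \<longrightarrow> T i j \<in> {1..k}" using valsB[OF T] by auto
      show "\<forall>x\<in>{1..k}. 1 \<le> \<psi> x \<and> \<psi> x \<le> n"
        unfolding \<psi>_def using Pn nth_mem unfolding k_def by (auto simp: Suc_le_eq)
    qed
    have cont: "\<forall>m. e m = content \<gamma> (G T) m"
    proof
      fix m
      show "e m = content \<gamma> (G T) m"
      proof (cases "m \<in> set P")
        case True
        define j0 where "j0 = idx m"
        have j0: "j0 < k" "P ! j0 = m" using I1[OF True] unfolding j0_def by auto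
        have "{c \<in> cells \<gamma>. \<psi> (case_prod T c) = Suc m} = {c \<in> cells \<gamma>. case_prod T c = Suc j0}"
        proof (intro Collect_cong conj_cong refl)
          fix c assume c: "c \<in> cells \<gamma>"
          obtain i j where cij: "c = (i, j)" by (cases c)
          have v: "1 \<le> T i j" "T i j \<le> k" using valsB[OF T] c cij by auto
          have "(P ! (T i j - 1) = P ! j0) = (T i j - 1 = j0)"
            using nth_eq_iff_index_eq[OF distP, of "T i j - 1" j0] v j0 unfolding k_def by simp
          then show "(\<psi> (case_prod T c) = Suc m) = (case_prod T c = Suc j0)"
            unfolding \<psi>_def using cij j0 v by auto
        qed
        moreover have "content \<gamma> (G T) m = card {c \<in> cells \<gamma>. \<psi> (case_prod T c) = Suc m}"
          unfolding G_def by (rule content_relabel)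
        ultimately have "content \<gamma> (G T) m = content \<gamma> T j0" unfolding content_def[of \<gamma> T j0] by simp
        also have "\<dots> = e' j0" using T unfolding B_def by simp
        also have "\<dots> = e m" using e'_def2 j0 by simp
        finally show ?thesis by simp
      next
        case False
        have "{c \<in> cells \<gamma>. \<psi> (case_prod T c) = Suc m} = {}"
        proof -
          { fix c assume c: "c \<in> cells \<gamma>" "\<psi> (case_prod T c) = Suc m"
            obtain i j where cij: "c = (i, j)" by (cases c)
            have v: "1 \<le> T i j" "T i j \<le> k" using valsB[OF T] c cij by auto
            then have "P ! (T i j - 1) \<in> set P" unfolding k_def by simp
            then have False using c cij False unfolding \<psi>_def by auto }
          then show ?thesis by blast
        qed
        moreover have "e m = 0" using False setP by auto
        ultimately show ?thesis unfolding G_def content_relabel by simp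
      qed
    qed
    have inv: "F (G T) = T"
    proof (intro ext)
      fix i j
      show "F (G T) i j = T i j"
      proof (cases "(i, j) \<in> cells \<gamma>")
        case True
        then have v: "1 \<le> T i j" "T i j \<le> k" using valsB[OF T] by auto
        then show ?thesis unfolding G_def F_def relabel_def \<psi>_def \<phi>_def using True I2[of "T i j - 1"] by simp
      next
        case False
        then show ?thesis unfolding G_def F_def relabel_def using tabD(1)[OF Tt] by auto
      qed
    qed
    show "G T \<in> A \<and> F (G T) = T" using tab cont inv unfolding A_def by simp
  qed
  have "bij_betw F A B"
    by (rule bij_betw_byWitness[where f'=G]) (use FA GB in auto)
  then have "card A = card B" by (rule bij_betw_same_card)
  then show ?thesis unfolding S_coeff_alt A_def B_def e'_def by simp
qed




definition Cof :: "nat \<Rightarrow> nat \<Rightarrow> nat list set" where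
  "Cof n t = {\<gamma>. is_comp \<gamma> \<and> length \<gamma> \<le> n \<and> sum_list \<gamma> = t}"

definition Amat :: "nat \<Rightarrow> nat list \<Rightarrow> nat list \<Rightarrow> rat" where
  "Amat n \<gamma> \<delta> = of_nat (S_coeff n \<gamma> (nth0 \<delta>))"

lemma Amat_size:
  assumes "is_comp \<gamma>" "is_comp \<delta>" "length \<gamma> \<le> n" "length \<delta> \<le> n" "sum_list \<gamma> \<noteq> sum_list \<delta>"
  shows "Amat n \<gamma> \<delta> = 0"
  using S_tri[OF assms(1-4)] assms(5) unfolding Amat_def revlex_gt_def by auto

lemma sum_reduce:
  fixes K :: "nat list \<Rightarrow> rat"
  assumes fin: "finite {\<gamma>. K \<gamma> \<noteq> 0}" and supp: "\<forall>\<gamma>. K \<gamma> \<noteq> 0 \<longrightarrow> is_comp \<gamma> \<and> length \<gamma> \<le> n"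
    and d: "is_comp \<delta>" "length \<delta> \<le> n"
  shows "(\<Sum>\<gamma>\<in>{\<gamma>. K \<gamma> \<noteq> 0}. K \<gamma> * Amat n \<gamma> \<delta>) = (\<Sum>\<gamma>\<in>Cof n (sum_list \<delta>). K \<gamma> * Amat n \<gamma> \<delta>)"
proof -
  let ?S = "{\<gamma>. K \<gamma> \<noteq> 0}" and ?C = "Cof n (sum_list \<delta>)"
  have finC: "finite ?C" unfolding Cof_def by (rule finite_comps)
  have "(\<Sum>\<gamma>\<in>?S. K \<gamma> * Amat n \<gamma> \<delta>) = (\<Sum>\<gamma>\<in>?S \<inter> ?C. K \<gamma> * Amat n \<gamma> \<delta>)"
  proof (rule sum.mono_neutral_right[OF fin])
    show "\<forall>i\<in>?S - ?S \<inter> ?C. K i * Amat n i \<delta> = 0"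
      using supp Amat_size d unfolding Cof_def by auto
  qed auto
  also have "\<dots> = (\<Sum>\<gamma>\<in>?C. K \<gamma> * Amat n \<gamma> \<delta>)"
    by (rule sum.mono_neutral_left[OF finC]) auto
  finally show ?thesis .
qed

lemma M_at_comp:
  assumes "is_comp \<alpha>" "is_comp \<delta>" "length \<delta> \<le> n"
  shows "M_coeff n \<alpha> (nth0 \<delta>) = (if \<alpha> = \<delta> then 1 else 0)"
proof -
  have pos: "\<And>i. i < length \<delta> \<Longrightarrow> 0 < \<delta> ! i" using assms(2) unfolding is_comp_def by (simp add: nth_mem)
  have S1: "set [0..<length \<delta>] = {m. nth0 \<delta> m \<noteq> 0}" using pos unfolding nth0_def by auto
  have S2: "map (nth0 \<delta>) [0..<length \<delta>] = \<delta>" by (rule nth_equalityI) (auto simp: nth0_def)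
  have S3: "\<forall>m\<in>set [0..<length \<delta>]. m < n" using assms(3) by auto
  have S0: "sorted_wrt (<) [0..<length \<delta>]" by (simp add: sorted_wrt_upt)
  show ?thesis using M_coeff_char[OF assms(1) S0 S1 S3] S2 by simp
qed

lemma KEY:
  assumes M: "M_expansion n \<alpha> K" and ca: "is_comp \<alpha>" and d: "is_comp \<delta>" "length \<delta> \<le> n"
  shows "(\<Sum>\<gamma>\<in>Cof n (sum_list \<delta>). K \<gamma> * Amat n \<gamma> \<delta>) = (if \<delta> = \<alpha> then 1 else 0)"
proof -
  have fin: "finite {\<gamma>. K \<gamma> \<noteq> 0}" and supp: "\<forall>\<gamma>. K \<gamma> \<noteq> 0 \<longrightarrow> is_comp \<gamma> \<and> length \<gamma> \<le> n"
    and eq: "of_nat (M_coeff n \<alpha> (nth0 \<delta>)) = (\<Sum>\<gamma>\<in>{\<gamma>. K \<gamma> \<noteq> 0}. K \<gamma> * of_nat (S_coeff n \<gamma> (nth0 \<delta>)))"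
    using M unfolding M_expansion_def by blast+
  have "(\<Sum>\<gamma>\<in>Cof n (sum_list \<delta>). K \<gamma> * Amat n \<gamma> \<delta>) = (\<Sum>\<gamma>\<in>{\<gamma>. K \<gamma> \<noteq> 0}. K \<gamma> * Amat n \<gamma> \<delta>)"
    using sum_reduce[OF fin supp d] by simp
  also have "\<dots> = of_nat (M_coeff n \<alpha> (nth0 \<delta>))" using eq unfolding Amat_def by simp
  also have "\<dots> = (if \<delta> = \<alpha> then 1 else 0)" using M_at_comp[OF ca d] by auto
  finally show ?thesis .
qed

lemma tri_facts:
  shows "\<forall>x. \<not> (\<lambda>\<delta> \<gamma>. revlex_gt \<gamma> \<delta>) x x"
    and "\<forall>x y z. (\<lambda>\<delta> \<gamma>. revlex_gt \<gamma> \<delta>) x y \<longrightarrow> (\<lambda>\<delta> \<gamma>. revlex_gt \<gamma> \<delta>) y z \<longrightarrow> (\<lambda>\<delta> \<gamma>. revlex_gt \<gamma> \<delta>) x z"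
    and "\<forall>\<gamma>\<in>Cof n t. \<forall>\<delta>\<in>Cof n t. Amat n \<gamma> \<delta> \<noteq> 0 \<longrightarrow> \<gamma> = \<delta> \<or> (\<lambda>\<delta> \<gamma>. revlex_gt \<gamma> \<delta>) \<delta> \<gamma>"
    and "\<forall>\<gamma>\<in>Cof n t. Amat n \<gamma> \<gamma> = 1"
    and "finite (Cof n t)"
  using revlex_gt_irrefl revlex_gt_trans S_tri S_diag finite_comps
  unfolding Cof_def Amat_def by (auto, blast)

lemma vanish:
  assumes M: "M_expansion n \<alpha> K" and ca: "is_comp \<alpha>" and nz: "K \<gamma> \<noteq> 0"
  shows "\<gamma> \<in> Cof n (sum_list \<alpha>)"
proof (rule ccontr)
  assume nC: "\<gamma> \<notin> Cof n (sum_list \<alpha>)"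
  have g: "is_comp \<gamma>" "length \<gamma> \<le> n" using M nz unfolding M_expansion_def by auto
  define t where "t = sum_list \<gamma>"
  have gC: "\<gamma> \<in> Cof n t" using g unfolding Cof_def t_def by simp
  have ts: "t \<noteq> sum_list \<alpha>" using nC g unfolding Cof_def t_def by simp
  have "\<forall>\<gamma>\<in>Cof n t. K \<gamma> = 0"
  proof (rule tri_zero[OF tri_facts(5) tri_facts(1) tri_facts(2) tri_facts(3) tri_facts(4) subset_refl])
    show "\<forall>\<gamma>\<in>Cof n t. \<forall>\<gamma>'\<in>Cof n t. revlex_gt \<gamma>' \<gamma> \<longrightarrow> \<gamma>' \<in> Cof n t" by simp
    show "\<forall>\<epsilon>\<in>Cof n t. (\<Sum>\<gamma>\<in>Cof n t. K \<gamma> * Amat n \<gamma> \<epsilon>) = 0"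
    proof
      fix \<epsilon> assume e: "\<epsilon> \<in> Cof n t"
      then have "sum_list \<epsilon> = t" "is_comp \<epsilon>" "length \<epsilon> \<le> n" unfolding Cof_def by auto
      then show "(\<Sum>\<gamma>\<in>Cof n t. K \<gamma> * Amat n \<gamma> \<epsilon>) = 0" using KEY[OF M ca, of \<epsilon>] ts by auto
    qed
  qed
  with gC nz show False by simp
qed

theorem theorem5p3:
  fixes n :: nat and \<alpha> :: "nat list"
  assumes "1 \<le> n" and "is_comp \<alpha>" and "length \<alpha> \<le> n"
  shows "(\<exists>!K. M_expansion n \<alpha> K) \<and>
         (\<forall>K. M_expansion n \<alpha> K \<longrightarrow>
              K \<alpha> = 1 \<and> (\<forall>\<gamma>. revlex_gt \<gamma> \<alpha> \<longrightarrow> K \<gamma> = 0))"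
proof -
  define s where "s = sum_list \<alpha>"
  define C where "C = Cof n s"
  have aC: "\<alpha> \<in> C" using assms unfolding C_def Cof_def s_def by simp
  note TF1 = tri_facts(1) and TF2 = tri_facts(2)
  note TF3 = tri_facts(3)[of n s, folded C_def] and TF4 = tri_facts(4)[of n s, folded C_def]
    and TF5 = tri_facts(5)[of n s, folded C_def]
  obtain K0 where K0out: "\<forall>\<gamma>. \<gamma> \<notin> C \<longrightarrow> K0 \<gamma> = 0"
    and K0eq: "\<forall>\<epsilon>\<in>C. (\<Sum>\<gamma>\<in>C. K0 \<gamma> * Amat n \<gamma> \<epsilon>) = (if \<epsilon> = \<alpha> then 1 else 0)"
    using tri_exists[OF TF5 TF1 TF2 TF3 TF4 aC] by blast
  have ex: "M_expansion n \<alpha> K0"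
  proof -
    have supp: "{\<gamma>. K0 \<gamma> \<noteq> 0} \<subseteq> C" using K0out by blast
    have fin: "finite {\<gamma>. K0 \<gamma> \<noteq> 0}" using supp TF5 by (rule finite_subset)
    have supp2: "\<forall>\<gamma>. K0 \<gamma> \<noteq> 0 \<longrightarrow> is_comp \<gamma> \<and> length \<gamma> \<le> n" using supp unfolding C_def Cof_def by blast
    have eqs: "\<forall>e. of_nat (M_coeff n \<alpha> e) = (\<Sum>\<gamma>\<in>{\<gamma>. K0 \<gamma> \<noteq> 0}. K0 \<gamma> * of_nat (S_coeff n \<gamma> e))"
    proof
      fix e :: "nat \<Rightarrow> nat"
      show "of_nat (M_coeff n \<alpha> e) = (\<Sum>\<gamma>\<in>{\<gamma>. K0 \<gamma> \<noteq> 0}. K0 \<gamma> * of_nat (S_coeff n \<gamma> e))"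
      proof (cases "\<exists>m. n \<le> m \<and> e m \<noteq> 0")
        case True
        then obtain m where m: "n \<le> m" "e m \<noteq> 0" by blast
        then show ?thesis using M_zero_out[where e=e and m=m and n=n, OF m(2,1)] S_zero_out[where e=e and m=m and n=n, OF m(2,1)] by simp
      next
        case False
        then have sub: "{m. e m \<noteq> 0} \<subseteq> {..<n}" by (auto simp: not_le)
        then have "finite {m. e m \<noteq> 0}" by (rule finite_subset) simp
        from ex1_implies_ex[OF ex1_sorted_list_for_set_if_finite[OF this]]
        obtain P where P: "sorted_wrt (<) P" "set P = {m. e m \<noteq> 0}" by blast
        have Pn: "\<forall>m\<in>set P. m < n" using P sub by auto
        define \<delta> where "\<delta> = map e P"
        have cd: "is_comp \<delta>" unfolding \<delta>_def is_comp_def using P by auto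
        have ld: "length \<delta> \<le> n"
        proof -
          have "distinct P" using P by (simp add: strict_sorted_iff)
          then have "length P = card (set P)" by (simp add: distinct_card)
          also have "\<dots> \<le> card {..<n}" using Pn by (intro card_mono) auto
          finally show ?thesis unfolding \<delta>_def by simp
        qed
        have Mv: "M_coeff n \<alpha> e = (if \<alpha> = \<delta> then 1 else 0)"
          using M_coeff_char[OF assms(2) P Pn] unfolding \<delta>_def by simp
        have "(\<Sum>\<gamma>\<in>{\<gamma>. K0 \<gamma> \<noteq> 0}. K0 \<gamma> * of_nat (S_coeff n \<gamma> e))
            = (\<Sum>\<gamma>\<in>{\<gamma>. K0 \<gamma> \<noteq> 0}. K0 \<gamma> * Amat n \<gamma> \<delta>)"
          unfolding Amat_def \<delta>_def using S_qsym[OF P Pn] by simp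
        also have "\<dots> = (\<Sum>\<gamma>\<in>Cof n (sum_list \<delta>). K0 \<gamma> * Amat n \<gamma> \<delta>)"
          by (rule sum_reduce[OF fin supp2 cd ld])
        also have "\<dots> = (if \<delta> = \<alpha> then 1 else 0)"
        proof (cases "sum_list \<delta> = s")
          case True
          then have "\<delta> \<in> C" using cd ld unfolding C_def Cof_def by simp
          then show ?thesis using K0eq True unfolding C_def by simp
        next
          case False
          then have "\<delta> \<noteq> \<alpha>" unfolding s_def by auto
          moreover have "(\<Sum>\<gamma>\<in>Cof n (sum_list \<delta>). K0 \<gamma> * Amat n \<gamma> \<delta>) = 0"
            using K0out False unfolding C_def Cof_def by (intro sum.neutral) auto
          ultimately show ?thesis by simp
        qed
        finally show ?thesis using Mv by auto
      qed
    qed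
    show ?thesis unfolding M_expansion_def using fin supp2 eqs by blast
  qed
  have uniq: "\<And>K1 K2. M_expansion n \<alpha> K1 \<Longrightarrow> M_expansion n \<alpha> K2 \<Longrightarrow> K1 = K2"
  proof -
    fix K1 K2 assume M1: "M_expansion n \<alpha> K1" and M2: "M_expansion n \<alpha> K2"
    have "\<forall>\<gamma>\<in>C. (\<lambda>\<gamma>. K1 \<gamma> - K2 \<gamma>) \<gamma> = 0"
    proof (rule tri_zero[OF TF5 TF1 TF2 TF3 TF4 subset_refl])
      show "\<forall>\<gamma>\<in>C. \<forall>\<gamma>'\<in>C. revlex_gt \<gamma>' \<gamma> \<longrightarrow> \<gamma>' \<in> C" by simp
      show "\<forall>\<epsilon>\<in>C. (\<Sum>\<gamma>\<in>C. (K1 \<gamma> - K2 \<gamma>) * Amat n \<gamma> \<epsilon>) = 0"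
      proof
        fix \<epsilon> assume e: "\<epsilon> \<in> C"
        then have es: "sum_list \<epsilon> = s" "is_comp \<epsilon>" "length \<epsilon> \<le> n" unfolding C_def Cof_def by auto
        have "(\<Sum>\<gamma>\<in>C. (K1 \<gamma> - K2 \<gamma>) * Amat n \<gamma> \<epsilon>) =
              (\<Sum>\<gamma>\<in>C. K1 \<gamma> * Amat n \<gamma> \<epsilon>) - (\<Sum>\<gamma>\<in>C. K2 \<gamma> * Amat n \<gamma> \<epsilon>)"
          by (simp add: left_diff_distrib sum_subtractf)
        then show "(\<Sum>\<gamma>\<in>C. (K1 \<gamma> - K2 \<gamma>) * Amat n \<gamma> \<epsilon>) = 0"
          using KEY[OF M1 assms(2) es(2,3)] KEY[OF M2 assms(2) es(2,3)] es(1) unfolding C_def by simp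
      qed
    qed
    moreover have "\<forall>\<gamma>. \<gamma> \<notin> C \<longrightarrow> K1 \<gamma> = 0 \<and> K2 \<gamma> = 0"
      using vanish[OF M1 assms(2)] vanish[OF M2 assms(2)] unfolding C_def s_def by blast
    ultimately show "K1 = K2" by (metis eq_iff_diff_eq_0 ext)
  qed
  have tri: "\<And>K. M_expansion n \<alpha> K \<Longrightarrow> K \<alpha> = 1 \<and> (\<forall>\<gamma>. revlex_gt \<gamma> \<alpha> \<longrightarrow> K \<gamma> = 0)"
  proof -
    fix K assume M: "M_expansion n \<alpha> K"
    define E where "E = {\<gamma>\<in>C. revlex_gt \<gamma> \<alpha>}"
    have KE: "\<forall>\<gamma>\<in>E. K \<gamma> = 0"
    proof (rule tri_zero[OF TF5 TF1 TF2 TF3 TF4])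
      show "E \<subseteq> C" unfolding E_def by auto
      show "\<forall>\<gamma>\<in>E. \<forall>\<gamma>'\<in>C. revlex_gt \<gamma>' \<gamma> \<longrightarrow> \<gamma>' \<in> E"
        unfolding E_def using revlex_gt_trans by blast
      show "\<forall>\<epsilon>\<in>E. (\<Sum>\<gamma>\<in>C. K \<gamma> * Amat n \<gamma> \<epsilon>) = 0"
      proof
        fix \<epsilon> assume e: "\<epsilon> \<in> E"
        then have es: "sum_list \<epsilon> = s" "is_comp \<epsilon>" "length \<epsilon> \<le> n" "\<epsilon> \<noteq> \<alpha>"
          unfolding E_def C_def Cof_def using revlex_gt_irrefl by auto
        then show "(\<Sum>\<gamma>\<in>C. K \<gamma> * Amat n \<gamma> \<epsilon>) = 0"
          using KEY[OF M assms(2) es(2,3)] unfolding C_def by simp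
      qed
    qed
    have z: "\<forall>\<gamma>. revlex_gt \<gamma> \<alpha> \<longrightarrow> K \<gamma> = 0"
    proof (intro allI impI)
      fix \<gamma> assume g: "revlex_gt \<gamma> \<alpha>"
      show "K \<gamma> = 0"
      proof (rule ccontr)
        assume "K \<gamma> \<noteq> 0"
        then have "\<gamma> \<in> C" using vanish[OF M assms(2)] unfolding C_def s_def by blast
        then show False using KE g \<open>K \<gamma> \<noteq> 0\<close> unfolding E_def by blast
      qed
    qed
    have "(\<Sum>\<gamma>\<in>C. K \<gamma> * Amat n \<gamma> \<alpha>) = 1"
      using KEY[OF M assms(2) assms(2) assms(3)] unfolding C_def s_def by simp
    moreover have "(\<Sum>\<gamma>\<in>C. K \<gamma> * Amat n \<gamma> \<alpha>) = K \<alpha> * Amat n \<alpha> \<alpha> + (\<Sum>\<gamma>\<in>C - {\<alpha>}. K \<gamma> * Amat n \<gamma> \<alpha>)"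
      using TF5 aC by (simp add: sum.remove)
    moreover have "(\<Sum>\<gamma>\<in>C - {\<alpha>}. K \<gamma> * Amat n \<gamma> \<alpha>) = 0"
    proof (rule sum.neutral, rule ballI)
      fix \<gamma> assume g: "\<gamma> \<in> C - {\<alpha>}"
      show "K \<gamma> * Amat n \<gamma> \<alpha> = 0"
      proof (cases "Amat n \<gamma> \<alpha> = 0")
        case False
        then have "revlex_gt \<gamma> \<alpha>" using TF3 g aC by auto
        then show ?thesis using z by simp
      qed simp
    qed
    moreover have "Amat n \<alpha> \<alpha> = 1" using TF4 aC by simp
    ultimately have "K \<alpha> = 1" by simp
    then show "K \<alpha> = 1 \<and> (\<forall>\<gamma>. revlex_gt \<gamma> \<alpha> \<longrightarrow> K \<gamma> = 0)" using z by simp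
  qed
  show ?thesis using ex uniq tri by blast
qed


end
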